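(* Let $h'_1,h'_2,l'_1,l'_2,\alpha'_1,\alpha'_2,\beta'$ be such that $N:=(h'_1-h'_2-l'_1+l'_2+\alpha'_1-\alpha'_2+\beta'-2)/2$ is a non-negative integer, and assume $\beta'<0$ and $\alpha'_1<\alpha'_2$ (real). Let $c_n(E')$, $c(E')$ be the polynomials of the context built from $h''_1=l'_1,\ l''_1=h'_1,\ h''_2=h'_2,\ l''_2=l'_2,\ \alpha''_i=\alpha'_i,\ \beta''=\beta'$, and let $c(E'_0)=0$. Let $\alpha_1\in\mathbb{C}$ be arbitrary and define $\alpha_2=\alpha_1-\alpha'_1+\alpha'_2+h'_2-l'_2+1+N$, $\beta=h'_1-l'_1+\alpha'_1-\alpha'_2-1-N$, $l_1=l'_1$, $l_2=l'_2$, $h_1=h'_1-h'_2+l'_2-1-N$, $h_2=l'_2-1-N$, $E=q^{\alpha_1-\alpha'_1}E'_0$. Let $\xi\neq0$ be either independent of $x$ or of the form $\xi=Ax$ with $A$ independent of $x$, and assume $\xi$, $x$ are such that no factor in a denominator below vanishes. Then the series $$g_1(x)=(1-q)x^{-\alpha_1}\frac{(q^{-l'_1+1/2}\xi/t_1,\ q^{-h'_2+l'_2-N}\xi/x;q)_\infty}{(q^{-h'_1+1/2}\xi/t_1,\ \xi/x;q)_\infty}\sum_{n=-\infty}^{\infty}\frac{(q^{-h'_1+1/2}\xi/t_1,\ \xi/x;q)_n}{(q^{-l'_1+1/2}\xi/t_1,\ q^{-h'_2+l'_2-N}\xi/x;q)_n}\sum_{k=0}^{N}q^{(-\beta'+1+k)n}\xi^{-\beta'+1+k}c_k(E'_0),$$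 $$g_2(x)=(1-q)x^{-\alpha_1-h'_2+l'_2-N}\frac{(q^{h'_1+1/2}t_1/\xi,\ qx/\xi;q)_\infty}{(q^{l'_1+1/2}t_1/\xi,\ q^{h'_2-l'_2+N+1}x/\xi;q)_\infty}\sum_{n=-\infty}^{\infty}\frac{(q^{l'_1+1/2}t_1/\xi,\ q^{h'_2-l'_2+N+1}x/\xi;q)_n}{(q^{h'_1+1/2}t_1/\xi,\ qx/\xi;q)_n}\sum_{k=0}^{N}q^{(-\alpha'_1+\alpha'_2+1+N-k)n}\xi^{\alpha'_1-\alpha'_2-1-N+k}c_k(E'_0)$$ converge and satisfy $A^{\langle4\rangle}(x;h_1,h_2,l_1,l_2,\alpha_1,\alpha_2,\beta)g_i(x)=Eg_i(x)$ for $i=1,2$.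
   Context: $q\in\mathbb{C}$ with $0<|q|<1$; powers $q^{a}$ via a fixed branch of $\log q$ (so for real $a$, $|q^a|=|q|^a$), $x^a,\xi^a$ fixed branches. $(a;q)_\infty=\prod_{k\ge0}(1-aq^k)$, $(a;q)_n=(a;q)_\infty/(aq^n;q)_\infty$ for all $n\in\mathbb{Z}$, $(a_1,\dots,a_m;q)_n=\prod_i(a_i;q)_n$. $t_1,t_2$ fixed non-zero constants; $T_x^{\pm1}g(x)=g(q^{\pm1}x)$; $A^{\langle 4\rangle}(x;h_1,h_2,l_1,l_2,\alpha_1,\alpha_2,\beta)=x^{-1}(x-q^{h_1+1/2}t_1)(x-q^{h_2+1/2}t_2)T_x^{-1}+q^{\alpha_1+\alpha_2}x^{-1}(x-q^{l_1-1/2}t_1)(x-q^{l_2-1/2}t_2)T_x-\{(q^{\alpha_1}+q^{\alpha_2})x+q^{(h_1+h_2+l_1+l_2+\alpha_1+\alpha_2)/2}(q^{\beta/2}+q^{-\beta/2})t_1t_2x^{-1}\}$. Polynomials: given $(h''_1,h''_2,l''_1,l''_2,\alpha''_1,\alpha''_2,\beta'')$ and $N$ with $\beta''\notin\{1,\dots,N\}$, put $\lambda''_1=(h''_1+h''_2-l''_1-l''_2-\alpha''_1-\alpha''_2-\beta''+2)/2$, $x''_n=t_1t_2q^{1-n+h''_1+h''_2-\lambda''_1}(1-q^{n})(1-q^{n-\beta''})$, $y''_n=q^{3/2-n-\lambda''_1}(q^{h''_1}t_1+q^{h''_2}t_2)+q^{n-3/2+\lambda''_1+\alpha''_1+\alpha''_2}(q^{l''_1}t_1+q^{l''_2}t_2)$,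 $z''_n=q^{2-n-\lambda''_1}(1-q^{n-2+\lambda''_1+\alpha''_1})(1-q^{n-2+\lambda''_1+\alpha''_2})$; $c_{-1}=0$, $c_0=1$, $c_n(E'')x''_n=c_{n-1}(E'')(E''+y''_n)-c_{n-2}(E'')z''_n$ ($1\le n\le N$), $c(E'')=x''_1\cdots x''_N[c_N(E'')(E''+y''_{N+1})-c_{N-1}(E'')z''_{N+1}]$. *)

theory Defs
  imports "HOL-Analysis.Analysis"
begin

text \<open>Powers of q: q^a := exp (a * Lq), where Lq is the fixed branch of log q.\<close>
definition qpw :: "complex \<Rightarrow> complex \<Rightarrow> complex" where
  "qpw Lq a = exp (a * Lq)"

definition qinf :: "complex \<Rightarrow> complex \<Rightarrow> complex" where
  "qinf q a = prodinf (\<lambda>k. 1 - a * q ^ k)"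

definition qpoch :: "complex \<Rightarrow> complex \<Rightarrow> int \<Rightarrow> complex" where
  "qpoch q a n = qinf q a / qinf q (a * q powi n)"

text \<open>The operator A<4>(x;h1,h2,l1,l2,al1,al2,be), acting on a function g of x,
  written in the logarithmic variable u (x = exp u), so that T_x^{+-1} is u -> u +- Lq.\<close>
definition A4 :: "complex \<Rightarrow> complex \<Rightarrow> complex \<Rightarrow> complex \<Rightarrow> complex \<Rightarrow> complex \<Rightarrow> complex
    \<Rightarrow> complex \<Rightarrow> complex \<Rightarrow> complex \<Rightarrow> (complex \<Rightarrow> complex) \<Rightarrow> complex \<Rightarrow> complex" where
  "A4 Lq t1 t2 h1 h2 l1 l2 al1 al2 be g u =
     (let x = exp u; Q = qpw Lq in
        inverse x * (x - Q (h1 + 1/2) * t1) * (x - Q (h2 + 1/2) * t2) * g (u - Lq)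
      + Q (al1 + al2) * inverse x * (x - Q (l1 - 1/2) * t1) * (x - Q (l2 - 1/2) * t2) * g (u + Lq)
      - ((Q al1 + Q al2) * x
         + Q ((h1 + h2 + l1 + l2 + al1 + al2) / 2) * (Q (be / 2) + Q (- be / 2)) * t1 * t2 * inverse x)
        * g u)"

definition lam1 :: "complex \<Rightarrow> complex \<Rightarrow> complex \<Rightarrow> complex \<Rightarrow> complex \<Rightarrow> complex \<Rightarrow> complex \<Rightarrow> complex" where
  "lam1 h1 h2 l1 l2 al1 al2 be = (h1 + h2 - l1 - l2 - al1 - al2 - be + 2) / 2"

definition xs :: "complex \<Rightarrow> complex \<Rightarrow> complex \<Rightarrow> complex \<Rightarrow> complex \<Rightarrow> complex \<Rightarrow> complex
    \<Rightarrow> complex \<Rightarrow> complex \<Rightarrow> complex \<Rightarrow> nat \<Rightarrow> complex" where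
  "xs Lq t1 t2 h1 h2 l1 l2 al1 al2 be n =
     (let Q = qpw Lq; lam = lam1 h1 h2 l1 l2 al1 al2 be in
       t1 * t2 * Q (1 - of_nat n + h1 + h2 - lam) * (1 - Q (of_nat n)) * (1 - Q (of_nat n - be)))"

definition ys :: "complex \<Rightarrow> complex \<Rightarrow> complex \<Rightarrow> complex \<Rightarrow> complex \<Rightarrow> complex \<Rightarrow> complex
    \<Rightarrow> complex \<Rightarrow> complex \<Rightarrow> complex \<Rightarrow> nat \<Rightarrow> complex" where
  "ys Lq t1 t2 h1 h2 l1 l2 al1 al2 be n =
     (let Q = qpw Lq; lam = lam1 h1 h2 l1 l2 al1 al2 be in
       Q (3/2 - of_nat n - lam) * (Q h1 * t1 + Q h2 * t2)
       + Q (of_nat n - 3/2 + lam + al1 + al2) * (Q l1 * t1 + Q l2 * t2))"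

definition zs :: "complex \<Rightarrow> complex \<Rightarrow> complex \<Rightarrow> complex \<Rightarrow> complex \<Rightarrow> complex \<Rightarrow> complex
    \<Rightarrow> complex \<Rightarrow> complex \<Rightarrow> complex \<Rightarrow> nat \<Rightarrow> complex" where
  "zs Lq t1 t2 h1 h2 l1 l2 al1 al2 be n =
     (let Q = qpw Lq; lam = lam1 h1 h2 l1 l2 al1 al2 be in
       Q (2 - of_nat n - lam) * (1 - Q (of_nat n - 2 + lam + al1)) * (1 - Q (of_nat n - 2 + lam + al2)))"

fun crec :: "(nat \<Rightarrow> complex) \<Rightarrow> (nat \<Rightarrow> complex) \<Rightarrow> (nat \<Rightarrow> complex) \<Rightarrow> complex \<Rightarrow> nat \<Rightarrow> complex" where
  "crec X Y Z E 0 = 1"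
| "crec X Y Z E (Suc 0) = (E + Y 1) / X 1"
| "crec X Y Z E (Suc (Suc n)) =
     (crec X Y Z E (Suc n) * (E + Y (n + 2)) - crec X Y Z E n * Z (n + 2)) / X (n + 2)"

definition cfin :: "(nat \<Rightarrow> complex) \<Rightarrow> (nat \<Rightarrow> complex) \<Rightarrow> (nat \<Rightarrow> complex) \<Rightarrow> nat \<Rightarrow> complex \<Rightarrow> complex" where
  "cfin X Y Z N E = (\<Prod>n\<in>{1..N}. X n) *
     (crec X Y Z E N * (E + Y (N + 1)) - (if N = 0 then 0 else crec X Y Z E (N - 1)) * Z (N + 1))"



text \<open>c_n(E) and c(E) for parameters (h1,h2,l1,l2,al1,al2,be) (the double-primed ones of the paper).\<close>
definition cseq :: "complex \<Rightarrow> complex \<Rightarrow> complex \<Rightarrow> complex \<Rightarrow> complex \<Rightarrow> complex \<Rightarrow> complex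
    \<Rightarrow> complex \<Rightarrow> complex \<Rightarrow> complex \<Rightarrow> complex \<Rightarrow> nat \<Rightarrow> complex" where
  "cseq Lq t1 t2 h1 h2 l1 l2 al1 al2 be E n =
     crec (xs Lq t1 t2 h1 h2 l1 l2 al1 al2 be) (ys Lq t1 t2 h1 h2 l1 l2 al1 al2 be)
          (zs Lq t1 t2 h1 h2 l1 l2 al1 al2 be) E n"

definition cpoly :: "complex \<Rightarrow> complex \<Rightarrow> complex \<Rightarrow> complex \<Rightarrow> complex \<Rightarrow> complex \<Rightarrow> complex
    \<Rightarrow> complex \<Rightarrow> complex \<Rightarrow> complex \<Rightarrow> nat \<Rightarrow> complex \<Rightarrow> complex" where
  "cpoly Lq t1 t2 h1 h2 l1 l2 al1 al2 be N E =
     cfin (xs Lq t1 t2 h1 h2 l1 l2 al1 al2 be) (ys Lq t1 t2 h1 h2 l1 l2 al1 al2 be)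
          (zs Lq t1 t2 h1 h2 l1 l2 al1 al2 be) N E"

text \<open>The four q-Pochhammer parameters of g_1 (in the log variable u, x = exp u, xi = exp (Lxi u)).\<close>
definition par1 :: "complex \<Rightarrow> complex \<Rightarrow> complex \<Rightarrow> complex \<Rightarrow> complex \<Rightarrow> complex \<Rightarrow> nat
    \<Rightarrow> (complex \<Rightarrow> complex) \<Rightarrow> complex \<Rightarrow> complex \<times> complex \<times> complex \<times> complex" where
  "par1 Lq t1 hp1 hp2 lp1 lp2 N Lxi u =
     (qpw Lq (- hp1 + 1/2) * exp (Lxi u) / t1,
      exp (Lxi u) / exp u,
      qpw Lq (- lp1 + 1/2) * exp (Lxi u) / t1,
      qpw Lq (- hp2 + lp2 - of_nat N) * exp (Lxi u) / exp u)"

text \<open>The four q-Pochhammer parameters of g_2, ordered (numerator, numerator, denominator, denominator)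
  as they occur in the bilateral sum: (q^{l'_1+1/2}t_1/xi, q^{h'_2-l'_2+N+1}x/xi; q^{h'_1+1/2}t_1/xi, qx/xi).\<close>
definition par2 :: "complex \<Rightarrow> complex \<Rightarrow> complex \<Rightarrow> complex \<Rightarrow> complex \<Rightarrow> complex \<Rightarrow> nat
    \<Rightarrow> (complex \<Rightarrow> complex) \<Rightarrow> complex \<Rightarrow> complex \<times> complex \<times> complex \<times> complex" where
  "par2 Lq t1 hp1 hp2 lp1 lp2 N Lxi u =
     (qpw Lq (lp1 + 1/2) * t1 / exp (Lxi u),
      qpw Lq (hp2 - lp2 + of_nat N + 1) * exp u / exp (Lxi u),
      qpw Lq (hp1 + 1/2) * t1 / exp (Lxi u),
      exp Lq * exp u / exp (Lxi u))"

text \<open>Non-vanishing of all factors appearing in denominators: for parameters a, b (which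
  appear in the denominator of the prefactor and, for negative n, in the denominator of the
  summand) all shifts a q^m, m in Z; for c, d (denominator of the summand for positive n) the
  shifts c q^m, m >= 0.\<close>
definition admissible :: "complex \<Rightarrow> complex \<times> complex \<times> complex \<times> complex \<Rightarrow> bool" where
  "admissible q p = (case p of (a, b, c, d) \<Rightarrow>
     (\<forall>m::int. a * q powi m \<noteq> 1 \<and> b * q powi m \<noteq> 1) \<and> (\<forall>m::nat. c * q ^ m \<noteq> 1 \<and> d * q ^ m \<noteq> 1))"

definition bilat_term :: "complex \<Rightarrow> complex \<times> complex \<times> complex \<times> complex \<Rightarrow> (int \<Rightarrow> complex) \<Rightarrow> int \<Rightarrow> complex" where
  "bilat_term q p S n = (case p of (a, b, c, d) \<Rightarrow>
     qpoch q a n * qpoch q b n / (qpoch q c n * qpoch q d n) * S n)"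

definition prefac :: "complex \<Rightarrow> complex \<times> complex \<times> complex \<times> complex \<Rightarrow> complex" where
  "prefac q p = (case p of (a, b, c, d) \<Rightarrow> qinf q c * qinf q d / (qinf q a * qinf q b))"

end

theory Submission
  imports Defs
begin

lemma KP1:
  fixes r jr ah jah bl jbl bm jbm pa jpa pc jpc pb jpb ma jma qN jqN ta jta tb es jes eu jeu C1 C2 C3 M1 M2 P1 P2 P3 P4 P5 L U4 U5 W :: complex
  assumes rel: "r * jr = 1" "ah * jah = 1" "bl * jbl = 1" "bm * jbm = 1" "pa * jpa = 1" "pc * jpc = 1" "pb * jpb = 1" "ma * jma = 1" "qN * jqN = 1" "ta * jta = 1" "es * jes = 1" "eu * jeu = 1"
  and eqs: "C1 = jeu * (eu - (r * r * r * bl * jpa * pc * jpb * qN) * ta) * (eu - (jr * bm * jqN) * tb)" "C2 = (r * r * ah * jbm * jpa * pc * ma * ma * qN) * jeu * (eu - (jr * bl) * ta) * (eu - (jr * bm) * tb)" "C3 = (ma + (r * r * ah * jbm * jpa * pc * ma * qN)) * eu + ((r * r * ah * bl * jpa * pc * jpb * ma * qN) + (bl * bm * jpa * pc * ma)) * ta * tb * jeu" "M1 = ma" "M2 = jma" "P1 = (1 - ((r * jbl) * jta * es)) * (1 - ((jr * jr * jr * jah * jbl * bm * pa * jpc * pb * jqN * jqN) * jta * es) * (jr * jr)) * (1 - (es * jeu) * (jr * jr)) * (1 - (es * jeu))" "P2 = (1 - ((r * jbl) * jta * es)) * (1 - ((jah * bm * jqN) * es * jeu) * (jr * jr)) * (1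 - ((jah * bm * jqN) * es * jeu)) * (1 - ((jr * jr * jr * jah * jbl * bm * pa * jpc * pb * jqN * jqN) * jta * es) * (jr * jr))" "P3 = (1 - ((r * jbl) * jta * es)) * (1 - ((jah * bm * jqN) * es * jeu)) * (1 - ((jr * jr * jr * jah * jbl * bm * pa * jpc * pb * jqN * jqN) * jta * es) * (jr * jr)) * (1 - (es * jeu) * (jr * jr))" "P4 = (1 - ((jr * jr * jr * jah * jbl * bm * pa * jpc * pb * jqN * jqN) * jta * es) * (jr * jr)) * (1 - ((jr * jr * jr * jah * jbl * bm * pa * jpc * pb * jqN * jqN) * jta * es)) * (1 - (es * jeu) * (jr * jr)) * (1 - (es * jeu))" "P5 = (1 - ((r * jbl) * jta * es) * (jr * jr)) * (1 - ((r * jbl) * jta * es)) * (1 - ((jah * bm * jqN) * es * jeu) * (jr * jr)) * (1 - ((jah * bm * jqN) * es * jeu))" "L = (jpa * ma)" "U4 = (r * r * jpb * ((ta * tb * r * r * bl * ah * qN * pc) * (jes * (jr * jr)) - r * qN * pc * (bl * ta + ah * tb) + qN * pc * (es * (r * r))))" "U5 = (jr * jr * pb * ((ta * tb * r * r * bl * ah * qN * pc) * jpb * (jes * (r * r)) - pa * jqN * jr * (r * r * r * r * ah * bl * jbm * jpa * pc * jpb * qN * qN * ta + bm * tb) + pa * jqN * (es * (jr * jr))))" "W = (- (ta * tb * r * r * bl * ah * qN * pc) * (1 + jpb) * jes - (pa + pc) * es)"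
  shows "C1 * (M1 * P1) + C2 * (M2 * P2) - C3 * P3 = L * (P4 * U4 + P5 * U5 + P3 * W)"
  unfolding eqs using rel by algebra

lemma KP2:
  fixes r jr ah jah bl jbl bm jbm pa jpa pc jpc pb jpb ma jma qN jqN ta jta tb es jes eu jeu C1 C2 C3 M1 M2 P1 P2 P3 P4 P5 L U4 U5 W :: complex
  assumes rel: "r * jr = 1" "ah * jah = 1" "bl * jbl = 1" "bm * jbm = 1" "pa * jpa = 1" "pc * jpc = 1" "pb * jpb = 1" "ma * jma = 1" "qN * jqN = 1" "ta * jta = 1" "es * jes = 1" "eu * jeu = 1"
  and eqs: "C1 = jeu * (eu - (r * r * r * bl * jpa * pc * jpb * qN) * ta) * (eu - (jr * bm * jqN) * tb)" "C2 = (r * r * ah * jbm * jpa * pc * ma * ma * qN) * jeu * (eu - (jr * bl) * ta) * (eu - (jr * bm) * tb)" "C3 = (ma + (r * r * ah * jbm * jpa * pc * ma * qN)) * eu + ((r * r * ah * bl * jpa * pc * jpb * ma * qN) + (bl * bm * jpa * pc * ma)) * ta * tb * jeu" "M1 = (ah * jbm * ma * qN)" "M2 = (jah * bm * jma * jqN)" "P1 = (1 - ((r * r * r * r * r * ah * bl * jbm * jpa * pc * jpb * qN * qN) * ta * es)) * (1 - ((r * r) * eu * es) * (jr * jr)) * (1 - ((r * r) * eu * es)) * (1 - ((r * bl) * ta * es) * (jr * jr))" "P2 = (1 - ((r * r * r * r * r * ah * bl * jbm * jpa * pc * jpb * qN * qN) * ta * es)) * (1 - ((r * bl) * ta * es)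 * (jr * jr)) * (1 - ((r * r * ah * jbm * qN) * eu * es) * (jr * jr)) * (1 - ((r * r * ah * jbm * qN) * eu * es))" "P3 = (1 - ((r * r * r * r * r * ah * bl * jbm * jpa * pc * jpb * qN * qN) * ta * es)) * (1 - ((r * r) * eu * es)) * (1 - ((r * bl) * ta * es) * (jr * jr)) * (1 - ((r * r * ah * jbm * qN) * eu * es) * (jr * jr))" "P4 = (1 - ((r * bl) * ta * es) * (jr * jr)) * (1 - ((r * bl) * ta * es)) * (1 - ((r * r * ah * jbm * qN) * eu * es) * (jr * jr)) * (1 - ((r * r * ah * jbm * qN) * eu * es))" "P5 = (1 - ((r * r * r * r * r * ah * bl * jbm * jpa * pc * jpb * qN * qN) * ta * es) * (jr * jr)) * (1 - ((r * r * r * r * r * ah * bl * jbm * jpa * pc * jpb * qN * qN) * ta * es)) * (1 - ((r * r) * eu * es) * (jr * jr)) * (1 - ((r * r) * eu * es))" "L = (jpa * ma)" "U4 = (jpa * pc * r * r * qN * ((ta * tb * r * r * bl * ah * qN * pc) * jpb * (es * (r * r)) - pa * jqN * jr * (r * r * r * r * ah * bl * jbm * jpa * pc * jpb * qN * qN * ta + bm * tb) + pa * jqN * (jes * (jr * jr))))" "U5 = (pa * jpc * jr * jr * jqN * ((ta * tb * r * r * bl * ah * qN * pc) * (es * (jr * jr)) - r * qN * pc * (bl * ta + ah * tb) + qN * pc * (jes * (r * r))))" "W = (- (ta * tb * r * r * bl * ah * qN * pc) * (1 + jpb) * es - (pa + pc) * jes)"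
  shows "C1 * (M1 * P1) + C2 * (M2 * P2) - C3 * P3 = L * (P4 * U4 + P5 * U5 + P3 * W)"
  unfolding eqs using rel by algebra


lemma qpw_add: "qpw Lq (a + b) = qpw Lq a * qpw Lq b"
  by (simp add: qpw_def distrib_right exp_add)
lemma qpw_diff: "qpw Lq (a - b) = qpw Lq a / qpw Lq b"
  by (simp add: qpw_def left_diff_distrib exp_diff)
lemma qpw_minus: "qpw Lq (- a) = inverse (qpw Lq a)"
  by (simp add: qpw_def exp_minus)
lemma qpw_nz [simp]: "qpw Lq a \<noteq> 0"
  by (simp add: qpw_def)
lemma qpw_0 [simp]: "qpw Lq 0 = 1" by (simp add: qpw_def)
lemma qpw_1: "qpw Lq 1 = exp Lq" by (simp add: qpw_def)
lemma qpw_of_nat: "qpw Lq (of_nat n) = exp Lq ^ n"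
  by (simp add: qpw_def exp_of_nat_mult)
lemma exp_of_int_mult: "exp (of_int n * (z::complex)) = exp z powi n"
  by (rule exp_power_int[symmetric])
lemma qpw_of_int: "qpw Lq (of_int n) = exp Lq powi n"
  by (simp add: qpw_def exp_of_int_mult)
lemma norm_qpw_real: "norm (qpw Lq (of_real r)) = exp (r * Re Lq)"
  by (simp add: qpw_def)

lemma qinf_has_prod:
  assumes "norm q < 1"
  shows "(\<lambda>k. 1 - a * q ^ k) has_prod qinf q a"
proof -
  have "summable (\<lambda>k. norm ((1 - a * q ^ k) - 1))"
    using assms by (simp add: norm_mult norm_power summable_mult summable_geometric)
  then have "abs_convergent_prod (\<lambda>k. 1 - a * q ^ k)"
    by (rule summable_imp_abs_convergent_prod)
  then have "convergent_prod (\<lambda>k. 1 - a * q ^ k)"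
    by (rule abs_convergent_prod_imp_convergent_prod)
  then show ?thesis unfolding qinf_def by (simp add: convergent_prod_has_prod_iff)
qed

lemma qinf_shift:
  assumes "norm q < 1"
  shows "qinf q a = (1 - a) * qinf q (a * q)"
proof -
  have "(\<lambda>k. 1 - (a*q) * q ^ k) has_prod qinf q (a*q)" by (rule qinf_has_prod[OF assms])
  then have "(\<lambda>k. (\<lambda>k. 1 - a * q ^ k) (Suc k)) has_prod qinf q (a*q)" by (simp add: mult.assoc)
  then have "(\<lambda>k. 1 - a * q ^ k) has_prod (qinf q (a*q) * (1 - a))"
    using has_prod_Suc_imp[of "\<lambda>k. 1 - a * q ^ k"] by simp
  then show ?thesis using has_prod_unique2[OF _ qinf_has_prod[OF assms]] by (metis mult.commute)
qed

lemma qinf_nz: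
  assumes "norm q < 1" "\<And>k. a * q ^ k \<noteq> 1"
  shows "qinf q a \<noteq> 0"
proof
  assume "qinf q a = 0"
  then have "0 \<in> range (\<lambda>k. 1 - a * q ^ k)"
    using has_prod_eq_0_iff[OF qinf_has_prod[OF assms(1)]] by simp
  then show False using assms(2) by force
qed


definition wq :: "complex \<Rightarrow> complex \<Rightarrow> complex \<Rightarrow> complex \<Rightarrow> complex \<Rightarrow> int \<Rightarrow> complex" where
  "wq q a b c d n = qinf q (c * q powi n) * qinf q (d * q powi n) / (qinf q (a * q powi n) * qinf q (b * q powi n))"

lemma qinf_shift_powi:
  assumes "norm q < 1" "q \<noteq> 0"
  shows "qinf q (a * q powi n) = (1 - a * q powi n) * qinf q (a * q powi (n+1))"
proof -
  have e: "a * q powi n * q = a * q powi (n+1)" using assms(2) by (simp add: power_int_add mult.assoc)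
  show ?thesis using qinf_shift[OF assms(1), of "a * q powi n"] unfolding e .
qed

lemma wq_step:
  assumes "norm q < 1" "q \<noteq> 0"
  shows "wq q a b c d n = wq q a b c d (n+1) *
     ((1 - c * q powi n) * (1 - d * q powi n) / ((1 - a * q powi n) * (1 - b * q powi n)))"
  unfolding wq_def
  apply (subst (1 2 3 4) qinf_shift_powi[OF assms])
  by (simp add: divide_inverse inverse_mult_distrib ac_simps)

lemma ratio_summable_on:
  fixes f :: "nat \<Rightarrow> complex"
  assumes "r < 1" "eventually (\<lambda>n. norm (f (Suc n)) \<le> r * norm (f n)) sequentially"
  shows "f summable_on UNIV"
proof -
  from assms(2) obtain M where M: "\<And>n. n \<ge> M \<Longrightarrow> norm (f (Suc n)) \<le> r * norm (f n)"
    by (auto simp: eventually_sequentially)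
  have "summable (\<lambda>n. norm (f n))"
    by (rule summable_ratio_test[OF assms(1), of M]) (use M in auto)
  then show ?thesis by (rule norm_summable_imp_summable_on)
qed

lemma wq_summable_pos:
  assumes q: "norm q < 1" "q \<noteq> 0" and rho: "norm \<rho> < 1"
  shows "(\<lambda>m::nat. wq q a b c d (int m) * \<rho> ^ m) summable_on UNIV"
proof -
  define R where "R m = (1 - a * q ^ m) * (1 - b * q ^ m) / ((1 - c * q ^ m) * (1 - d * q ^ m))" for m :: nat
  have qm: "(\<lambda>m. q ^ m) \<longlonglongrightarrow> 0" using q by (intro LIMSEQ_power_zero) 
  have "R \<longlonglongrightarrow> (1 - a * 0) * (1 - b * 0) / ((1 - c * 0) * (1 - d * 0))"
    unfolding R_def by (intro tendsto_intros qm) auto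
  then have "R \<longlonglongrightarrow> 1" by simp
  then have "(\<lambda>m. norm \<rho> * norm (R m)) \<longlonglongrightarrow> norm \<rho> * norm (1::complex)"
    by (intro tendsto_intros)
  then have ev1: "eventually (\<lambda>m. norm \<rho> * norm (R m) < (1 + norm \<rho>)/2) sequentially"
    using rho by (intro order_tendstoD(2)) auto
  have ev0: "eventually (\<lambda>m. norm (z * q ^ m) < 1) sequentially" for z
  proof -
    have "(\<lambda>m. z * q ^ m) \<longlonglongrightarrow> z * 0" by (intro tendsto_intros qm)
    then have "(\<lambda>m. norm (z * q ^ m)) \<longlonglongrightarrow> 0" using tendsto_norm by fastforce
    then show ?thesis by (intro order_tendstoD(2)) auto
  qed
  have nz: "norm (z * q ^ m) < 1 \<Longrightarrow> 1 - z * q ^ m \<noteq> 0" for z m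
    by (metis norm_one order_less_irrefl right_minus_eq)
  show ?thesis
  proof (rule ratio_summable_on[of "(1 + norm \<rho>)/2"])
    show "(1 + norm \<rho>) / 2 < 1" using rho by simp
    show "eventually (\<lambda>n. norm (wq q a b c d (int (Suc n)) * \<rho> ^ Suc n) \<le> (1 + norm \<rho>) / 2 * norm (wq q a b c d (int n) * \<rho> ^ n)) sequentially"
      using ev1 ev0[of c] ev0[of d] ev0[of a] ev0[of b]
    proof eventually_elim
      case (elim m)
      have st: "wq q a b c d (int m) = wq q a b c d (int m + 1) * ((1 - c * q ^ m) * (1 - d * q ^ m) / ((1 - a * q ^ m) * (1 - b * q ^ m)))"
        using wq_step[OF q, of a b c d "int m"] by simp
      define X where "X = (1 - a * q ^ m) * (1 - b * q ^ m)"
      define Y where "Y = (1 - c * q ^ m) * (1 - d * q ^ m)"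
      define Ri where "Ri = Y / X"
      have "X \<noteq> 0" "Y \<noteq> 0" unfolding X_def Y_def
        using nz[OF elim(2)] nz[OF elim(3)] nz[OF elim(4)] nz[OF elim(5)] by auto
      then have Rinv: "Ri * R m = 1"
        unfolding R_def Ri_def X_def[symmetric] Y_def[symmetric] by simp
      have "wq q a b c d (int (Suc m)) = wq q a b c d (int m + 1) * (Ri * R m)"
        using Rinv by (simp add: add.commute)
      also have "\<dots> = wq q a b c d (int m) * R m"
        using st unfolding Ri_def X_def Y_def by (simp add: mult.assoc)
      finally have "wq q a b c d (int (Suc m)) = wq q a b c d (int m) * R m" .
      then have "norm (wq q a b c d (int (Suc m)) * \<rho> ^ Suc m) = (norm \<rho> * norm (R m)) * norm (wq q a b c d (int m) * \<rho> ^ m)"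
        by (simp add: norm_mult norm_power)
      also have "\<dots> \<le> (1 + norm \<rho>) / 2 * norm (wq q a b c d (int m) * \<rho> ^ m)"
        using elim(1) by (intro mult_right_mono) auto
      finally show ?case .
    qed
  qed
qed

lemma wq_summable_neg:
  assumes q: "norm q < 1" "q \<noteq> 0" and ab: "a \<noteq> 0" "b \<noteq> 0"
    and cd: "norm (c * d) < norm \<rho> * norm (a * b)"
  shows "(\<lambda>m::nat. wq q a b c d (- int m) * \<rho> powi (- int m)) summable_on UNIV"
proof -
  have rho0: "\<rho> \<noteq> 0" using cd by auto
  define z where "z m = q ^ Suc m" for m
  define \<phi> where "\<phi> w = (w - c) * (w - d) / ((w - a) * (w - b))" for w
  have z0: "z \<longlonglongrightarrow> 0" unfolding z_def using q
    by (intro LIMSEQ_power_zero[THEN LIMSEQ_Suc])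
  have "(\<lambda>m. \<phi> (z m)) \<longlonglongrightarrow> (0 - c) * (0 - d) / ((0 - a) * (0 - b))"
    unfolding \<phi>_def by (intro tendsto_intros z0) (use ab in auto)
  then have lim: "(\<lambda>m. norm (\<phi> (z m)) / norm \<rho>) \<longlonglongrightarrow> norm ((0 - c) * (0 - d) / ((0 - a) * (0 - b))) / norm \<rho>"
    by (intro tendsto_intros) (use rho0 in auto)
  define t where "t = norm ((0 - c) * (0 - d) / ((0 - a) * (0 - b))) / norm \<rho>"
  have tl: "t < 1" unfolding t_def
    using cd ab rho0 by (simp add: norm_mult norm_divide field_simps)
  have "(1 + t) / 2 > t" using tl by (simp add: field_simps)
  then have ev: "eventually (\<lambda>m. norm (\<phi> (z m)) / norm \<rho> < (1 + t) / 2) sequentially"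
    using lim unfolding t_def[symmetric] by (intro order_tendstoD(2)) auto
  from ev show ?thesis
  proof (intro ratio_summable_on[of "(1 + t) / 2"], goal_cases)
    case 1
    then show ?case using tl by (simp add: field_simps)
  next
    case 2
    then show ?case
    proof eventually_elim
      case (elim m)
      let ?r = "(1 + t) / 2"
      have zq: "q powi (- int (Suc m)) = inverse (z m)" unfolding z_def
        by (metis power_int_minus power_int_of_nat)
      have znz: "z m \<noteq> 0" unfolding z_def using q by simp
      have st: "wq q a b c d (- int (Suc m)) = wq q a b c d (- int m) * \<phi> (z m)"
      proof -
        have "wq q a b c d (- int (Suc m)) = wq q a b c d (- int (Suc m) + 1) *
           ((1 - c * q powi (- int (Suc m))) * (1 - d * q powi (- int (Suc m))) /
            ((1 - a * q powi (- int (Suc m))) * (1 - b * q powi (- int (Suc m)))))"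
          by (rule wq_step[OF q])
        also have "- int (Suc m) + 1 = - int m" by simp
        also have "(1 - c * q powi (- int (Suc m))) * (1 - d * q powi (- int (Suc m))) /
            ((1 - a * q powi (- int (Suc m))) * (1 - b * q powi (- int (Suc m)))) = \<phi> (z m)"
          unfolding zq \<phi>_def using znz
          by (simp add: divide_simps)
        finally show ?thesis .
      qed
      have "norm (wq q a b c d (- int (Suc m)) * \<rho> powi (- int (Suc m))) =
            (norm (\<phi> (z m)) / norm \<rho>) * norm (wq q a b c d (- int m) * \<rho> powi (- int m))"
      proof -
        have r1: "\<rho> powi (- int (Suc m)) = inverse (\<rho> ^ Suc m)" by (metis power_int_minus power_int_of_nat)
        have r2: "\<rho> powi (- int m) = inverse (\<rho> ^ m)" by (metis power_int_minus power_int_of_nat)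
        show ?thesis unfolding st r1 r2 using rho0
          by (simp add: norm_mult norm_inverse norm_power norm_divide field_simps)
      qed
      also have "\<dots> \<le> ?r * norm (wq q a b c d (- int m) * \<rho> powi (- int m))"
        using elim by (intro mult_right_mono) auto
      finally show ?case .
    qed
  qed
qed

lemma summable_on_int_split:
  fixes f :: "int \<Rightarrow> complex"
  assumes "(\<lambda>m::nat. f (int m)) summable_on UNIV" "(\<lambda>m::nat. f (- int m)) summable_on UNIV"
  shows "f summable_on UNIV"
proof -
  have "f summable_on (range int)"
    using assms(1) by (subst summable_on_reindex) (auto simp: o_def)
  moreover have "f summable_on (range (\<lambda>m::nat. - int m))"
    using assms(2) by (subst summable_on_reindex) (auto simp: o_def inj_on_def)
  ultimately have "f summable_on (range int \<union> range (\<lambda>m::nat. - int m))"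
    by (rule summable_on_union)
  moreover have "range int \<union> range (\<lambda>m::nat. - int m) = UNIV"
  proof -
    have "x \<in> range int \<union> range (\<lambda>m::nat. - int m)" for x :: int
    proof (cases "x \<ge> 0")
      case True then show ?thesis by (metis UnI1 nonneg_int_cases rangeI)
    next
      case False then have "x = - int (nat (-x))" by simp
      then show ?thesis by (metis UnI2 rangeI)
    qed
    then show ?thesis by blast
  qed
  ultimately show ?thesis by simp
qed

lemma wq_summable:
  assumes q: "norm q < 1" "q \<noteq> 0" and ab: "a \<noteq> 0" "b \<noteq> 0"
    and rho: "norm \<rho> < 1" and cd: "norm (c * d) < norm \<rho> * norm (a * b)"
  shows "(\<lambda>n::int. wq q a b c d n * \<rho> powi n) summable_on UNIV"
proof (rule summable_on_int_split)
  show "(\<lambda>m::nat. wq q a b c d (int m) * \<rho> powi (int m)) summable_on UNIV"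
    using wq_summable_pos[OF q rho, of a b c d] by simp
  show "(\<lambda>m::nat. wq q a b c d (- int m) * \<rho> powi (- int m)) summable_on UNIV"
    by (rule wq_summable_neg[OF q ab cd])
qed


lemma crec_step:
  assumes "X (Suc n) \<noteq> 0"
  shows "crec X Y Z E (Suc n) * X (Suc n) = crec X Y Z E n * (E + Y (Suc n)) - (if n = 0 then 0 else crec X Y Z E (n - 1)) * Z (Suc n)"
proof (cases n)
  case 0 then show ?thesis using assms by simp
next
  case (Suc m)
  then show ?thesis using assms by (simp add: numeral_2_eq_2)
qed

lemma crec_partial:
  fixes s :: complex
  assumes X0: "X 0 = 0" and Xnz: "\<And>n. 1 \<le> n \<Longrightarrow> n \<le> N \<Longrightarrow> X n \<noteq> 0" and s: "s \<noteq> 0"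
  shows "n \<le> N \<Longrightarrow> (\<Sum>k\<le>n. crec X Y Z E k * s ^ k * (X k / s - E - Y (k+1) + s * Z (k+2)))
     = s ^ n * ((if n = 0 then 0 else crec X Y Z E (n - 1)) * Z (n+1) - crec X Y Z E n * (E + Y (n+1)))
       + s ^ (n+1) * crec X Y Z E n * Z (n+2)"
proof (induction n)
  case 0
  then show ?case using X0 by (simp add: algebra_simps)
next
  case (Suc n)
  have rec: "crec X Y Z E (Suc n) * X (Suc n) = crec X Y Z E n * (E + Y (Suc n)) - (if n = 0 then 0 else crec X Y Z E (n - 1)) * Z (Suc n)"
    by (rule crec_step) (use Xnz Suc.prems in auto)
  have "(\<Sum>k\<le>Suc n. crec X Y Z E k * s ^ k * (X k / s - E - Y (k+1) + s * Z (k+2)))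
     = (\<Sum>k\<le>n. crec X Y Z E k * s ^ k * (X k / s - E - Y (k+1) + s * Z (k+2)))
       + crec X Y Z E (Suc n) * s ^ Suc n * (X (Suc n) / s - E - Y (Suc n + 1) + s * Z (Suc n + 2))"
    by simp
  also have "\<dots> = s ^ n * ((if n = 0 then 0 else crec X Y Z E (n - 1)) * Z (n+1) - crec X Y Z E n * (E + Y (n+1)))
       + s ^ (n+1) * crec X Y Z E n * Z (n+2)
       + crec X Y Z E (Suc n) * s ^ Suc n * (X (Suc n) / s - E - Y (Suc n + 1) + s * Z (Suc n + 2))"
    using Suc by simp
  also have "\<dots> = s ^ n * ((if n = 0 then 0 else crec X Y Z E (n - 1)) * Z (n+1) - crec X Y Z E n * (E + Y (n+1))
        + crec X Y Z E (Suc n) * X (Suc n))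
       + s ^ Suc n * (crec X Y Z E n * Z (Suc n + 1) - crec X Y Z E (Suc n) * (E + Y (Suc n + 1)))
       + s ^ (Suc n + 1) * crec X Y Z E (Suc n) * Z (Suc n + 2)"
    using s by (simp add: field_simps)
  also have "s ^ n * ((if n = 0 then 0 else crec X Y Z E (n - 1)) * Z (n+1) - crec X Y Z E n * (E + Y (n+1))
        + crec X Y Z E (Suc n) * X (Suc n)) = 0"
    using rec by simp
  finally show ?case by simp
qed

lemma crec_sum_zero:
  fixes s :: complex
  assumes X0: "X 0 = 0" and Xnz: "\<And>n. 1 \<le> n \<Longrightarrow> n \<le> N \<Longrightarrow> X n \<noteq> 0" and s: "s \<noteq> 0"
    and cf: "cfin X Y Z N E = 0" and ZN: "Z (N+2) = 0"
  shows "(\<Sum>k\<le>N. crec X Y Z E k * s ^ k * (X k / s - E - Y (k+1) + s * Z (k+2))) = 0"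
proof -
  have "(\<Prod>n\<in>{1..N}. X n) \<noteq> 0" using Xnz by (simp add: prod_zero_iff)
  then have br: "crec X Y Z E N * (E + Y (N + 1)) - (if N = 0 then 0 else crec X Y Z E (N - 1)) * Z (N + 1) = 0"
    using cf unfolding cfin_def by simp
  have br2: "(if N = 0 then 0 else crec X Y Z E (N - 1)) * Z (N + 1) - crec X Y Z E N * (E + Y (N + 1)) = 0"
    using br by (simp add: algebra_simps)
  show ?thesis
    using crec_partial[where n=N and Y=Y and Z=Z and E=E and X=X and s=s and N=N, OF X0 Xnz s order_refl] ZN br2
    by simp
qed


definition Kg :: "complex \<Rightarrow> complex \<Rightarrow> complex \<Rightarrow> complex \<Rightarrow> complex \<Rightarrow> complex" where
  "Kg q zc zd za zb = qinf q zc * qinf q zd / (qinf q za * qinf q zb)"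

lemma inv_from_eq: "(A::complex) = f * B \<Longrightarrow> A \<noteq> 0 \<Longrightarrow> inverse B = f / A"
  by (simp add: field_simps)

context
  fixes q :: complex
  assumes q: "norm q < 1" "q \<noteq> 0"
begin

lemma num0: "qinf q z = (1 - z) * qinf q (z * q)"
  by (rule qinf_shift[OF q(1)])

lemma numm: "qinf q (z * inverse q) = (1 - z * inverse q) * (1 - z) * qinf q (z * q)"
proof -
  have "qinf q (z * inverse q) = (1 - z * inverse q) * qinf q (z * inverse q * q)" by (rule qinf_shift[OF q(1)])
  also have "z * inverse q * q = z" using q(2) by (simp add: mult.assoc)
  finally show ?thesis using num0[of z] by simp
qed

lemma den0: "qinf q (z * inverse q) \<noteq> 0 \<Longrightarrow> inverse (qinf q z) = (1 - z * inverse q) / qinf q (z * inverse q)"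
proof -
  assume nz: "qinf q (z * inverse q) \<noteq> 0"
  have zz: "z * inverse q * q = z" using q(2) by (simp add: mult.assoc)
  have e: "qinf q (z * inverse q) = (1 - z * inverse q) * qinf q z"
    using qinf_shift[OF q(1), of "z * inverse q"] unfolding zz .
  show ?thesis by (rule inv_from_eq[OF e nz])
qed

lemma den1: "qinf q (z * inverse q) \<noteq> 0 \<Longrightarrow> inverse (qinf q (z * q)) = (1 - z * inverse q) * (1 - z) / qinf q (z * inverse q)"
proof -
  assume nz: "qinf q (z * inverse q) \<noteq> 0"
  have zz: "z * inverse q * q = z" using q(2) by (simp add: mult.assoc)
  have e: "qinf q (z * inverse q) = ((1 - z * inverse q) * (1 - z)) * qinf q (z * q)"
    using qinf_shift[OF q(1), of "z * inverse q"] num0[of z] unfolding zz by (simp add: mult.assoc)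
  show ?thesis by (rule inv_from_eq[OF e nz])
qed

lemma five_forms:
  fixes zc zd za zb :: complex
  assumes Ca: "qinf q (za * inverse q) \<noteq> 0" and Cb: "qinf q (zb * inverse q) \<noteq> 0"
  defines "G \<equiv> qinf q (zc * q) * qinf q (zd * q) / (qinf q (za * inverse q) * qinf q (zb * inverse q))"
  shows "Kg q zc zd za zb = G * ((1 - zc) * (1 - zd) * (1 - za * inverse q) * (1 - zb * inverse q))"
    and "Kg q zc (zd * q) za (zb * q) = G * ((1 - zc) * (1 - za * inverse q) * (1 - zb * inverse q) * (1 - zb))"
    and "Kg q zc (zd * inverse q) za (zb * inverse q) = G * ((1 - zc) * (1 - zd * inverse q) * (1 - zd) * (1 - za * inverse q))"
    and "Kg q (zc * q) (zd * q) (za * q) (zb * q) = G * ((1 - za * inverse q) * (1 - za) * (1 - zb * inverse q) * (1 - zb))"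
    and "Kg q (zc * inverse q) (zd * inverse q) (za * inverse q) (zb * inverse q) = G * ((1 - zc * inverse q) * (1 - zc) * (1 - zd * inverse q) * (1 - zd))"
proof -
  have d: "a / (b * c) = a * inverse b * inverse c" for a b c :: complex by (simp add: divide_inverse)
  note dd = den0[OF Ca] den0[OF Cb] den1[OF Ca] den1[OF Cb]
  show "Kg q zc zd za zb = G * ((1 - zc) * (1 - zd) * (1 - za * inverse q) * (1 - zb * inverse q))"
    unfolding Kg_def d G_def dd num0[of zc] num0[of zd] by (simp add: divide_inverse ac_simps)
  show "Kg q zc (zd * q) za (zb * q) = G * ((1 - zc) * (1 - za * inverse q) * (1 - zb * inverse q) * (1 - zb))"
    unfolding Kg_def d G_def dd num0[of zc] by (simp add: divide_inverse ac_simps)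
  show "Kg q zc (zd * inverse q) za (zb * inverse q) = G * ((1 - zc) * (1 - zd * inverse q) * (1 - zd) * (1 - za * inverse q))"
    unfolding Kg_def d G_def dd num0[of zc] numm[of zd] by (simp add: divide_inverse ac_simps)
  show "Kg q (zc * q) (zd * q) (za * q) (zb * q) = G * ((1 - za * inverse q) * (1 - za) * (1 - zb * inverse q) * (1 - zb))"
    unfolding Kg_def d G_def dd by (simp add: divide_inverse ac_simps)
  show "Kg q (zc * inverse q) (zd * inverse q) (za * inverse q) (zb * inverse q) = G * ((1 - zc * inverse q) * (1 - zc) * (1 - zd * inverse q) * (1 - zd))"
    unfolding Kg_def d G_def numm[of zc] numm[of zd] by (simp add: divide_inverse ac_simps)
qed

end

lemma glue:
  fixes c1 c2 c3 m1 m2 p1 p2 p3 p4 p5 u4 u5 w l G :: complex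
  assumes "c1 * (m1 * p1) + c2 * (m2 * p2) - c3 * p3 = l * (p4 * u4 + p5 * u5 + p3 * w)"
  shows "c1 * (m1 * (G * p1)) + c2 * (m2 * (G * p2)) - c3 * (G * p3) = l * ((G * p4) * u4 + (G * p5) * u5 + (G * p3) * w)"
proof -
  have "c1 * (m1 * (G * p1)) + c2 * (m2 * (G * p2)) - c3 * (G * p3) = G * (c1 * (m1 * p1) + c2 * (m2 * p2) - c3 * p3)"
    by (simp add: algebra_simps)
  also have "\<dots> = G * (l * (p4 * u4 + p5 * u5 + p3 * w))" using assms by simp
  also have "\<dots> = l * ((G * p4) * u4 + (G * p5) * u5 + (G * p3) * w)" by (simp add: algebra_simps)
  finally show ?thesis .
qed


lemma cd_help1: "(C::complex) * D = R * A \<Longrightarrow> (C * e / t) * (D * e / x) = R * ((A * e / t) * (e / x))"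
proof -
  assume h: "C * D = R * A"
  have "(C * e / t) * (D * e / x) = (C * D) * (e * e / (t * x))" by (simp add: divide_inverse mult_ac)
  also have "\<dots> = R * ((A * e / t) * (e / x))" unfolding h by (simp add: divide_inverse mult_ac)
  finally show ?thesis .
qed
lemma arg_help1: "(C::complex) * (e * p) / t = (C * e / t) * p" by (simp add: divide_inverse mult_ac)
lemma arg_help2: "exp (a::complex) * p / exp b = (exp a / exp b) * p" by (simp add: divide_inverse mult_ac)

lemma cd_help2: "(C::complex) * L = R * (A * B) \<Longrightarrow> (C * t * e) * (L * x * e) = R * ((A * t * e) * (B * x * e))"
proof -
  assume h: "C * L = R * (A * B)"
  have "(C * t * e) * (L * x * e) = (C * L) * (t * e * x * e)" by (simp add: mult_ac)
  also have "\<dots> = R * ((A * t * e) * (B * x * e))" unfolding h by (simp add: mult_ac)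
  finally show ?thesis .
qed
lemma arg_help3: "(X::complex) * Y * (e * p) = (X * Y * e) * p" by (simp add: mult_ac)

lemma infsum_diff_int:
  fixes f g :: "int \<Rightarrow> complex"
  assumes "f summable_on UNIV" "g summable_on UNIV"
  shows "infsum (\<lambda>n. f n - g n) UNIV = infsum f UNIV - infsum g UNIV"
proof -
  have "(\<lambda>n. - g n) summable_on UNIV" using assms(2) summable_on_uminus[of g UNIV] by simp
  then have "infsum (\<lambda>n. f n + - g n) UNIV = infsum f UNIV + infsum (\<lambda>n. - g n) UNIV"
    by (rule infsum_add[OF assms(1)])
  then show ?thesis by (simp add: infsum_uminus)
qed

lemma infsum_shift1:
  fixes D :: "int \<Rightarrow> complex"
  shows "infsum (\<lambda>n. D (n + 1)) UNIV = infsum D UNIV"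
proof -
  have "bij_betw (\<lambda>n::int. n + 1) UNIV UNIV"
    by (rule bij_betwI[of _ _ _ "\<lambda>n. n - 1"]) auto
  then show ?thesis by (rule infsum_reindex_bij_betw)
qed

lemma summable_shift1:
  fixes D :: "int \<Rightarrow> complex"
  shows "(\<lambda>n. D (n + 1)) summable_on UNIV \<longleftrightarrow> D summable_on UNIV"
proof -
  have "bij_betw (\<lambda>n::int. n + 1) UNIV UNIV"
    by (rule bij_betwI[of _ _ _ "\<lambda>n. n - 1"]) auto
  then show ?thesis by (rule summable_on_reindex_bij_betw)
qed

lemma tele_sum:
  fixes fm fp f0 D :: "int \<Rightarrow> complex"
  assumes sm: "fm summable_on UNIV" and sp: "fp summable_on UNIV" and s0: "f0 summable_on UNIV"
    and sD: "D summable_on UNIV"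
    and loc: "\<And>n. c1 * fm n + c2 * fp n - c3 * f0 n = E * f0 n + D (n + 1) - D n"
  shows "c1 * infsum fm UNIV + c2 * infsum fp UNIV - c3 * infsum f0 UNIV = E * infsum f0 UNIV"
proof -
  have sD1: "(\<lambda>n. D (n + 1)) summable_on UNIV" using sD summable_shift1 by blast
  have a: "(\<lambda>n. c1 * fm n) summable_on UNIV" "(\<lambda>n. c2 * fp n) summable_on UNIV" "(\<lambda>n. c3 * f0 n) summable_on UNIV"
    "(\<lambda>n. E * f0 n) summable_on UNIV"
    using sm sp s0 by (auto intro: summable_on_cmult_right)
  have "c1 * infsum fm UNIV + c2 * infsum fp UNIV - c3 * infsum f0 UNIV
      = infsum (\<lambda>n. c1 * fm n + c2 * fp n - c3 * f0 n) UNIV"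
    using a by (simp add: infsum_diff_int infsum_add summable_on_add infsum_cmult_right')
  also have "\<dots> = infsum (\<lambda>n. E * f0 n + D (n + 1) - D n) UNIV" using loc by simp
  also have "\<dots> = E * infsum f0 UNIV + infsum (\<lambda>n. D (n + 1)) UNIV - infsum D UNIV"
    using a sD1 sD by (simp add: infsum_diff_int infsum_add summable_on_add infsum_cmult_right')
  also have "\<dots> = E * infsum f0 UNIV" by (simp add: infsum_shift1)
  finally show ?thesis .
qed

lemma adm_qinf:
  assumes q: "norm q < 1" "q \<noteq> 0" and a: "\<forall>m::int. a * q powi m \<noteq> 1"
  shows "qinf q (a * q powi j) \<noteq> 0"
proof (rule qinf_nz[OF q(1)])
  fix k :: nat
  have "q powi (j + int k) = q powi j * q ^ k" using q(2) by (simp add: power_int_add)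
  then have "a * q powi j * q ^ k = a * q powi (j + int k)" by (simp add: mult.assoc)
  then show "a * q powi j * q ^ k \<noteq> 1" using a by metis
qed

lemma adm_parts:
  assumes q: "norm q < 1" "q \<noteq> 0" and adm: "admissible q (a, b, c, d)"
  shows "qinf q a \<noteq> 0" "qinf q b \<noteq> 0" "qinf q c \<noteq> 0" "qinf q d \<noteq> 0"
    "\<And>j. qinf q (a * q powi j) \<noteq> 0" "\<And>j. qinf q (b * q powi j) \<noteq> 0"
proof -
  have A: "\<forall>m::int. a * q powi m \<noteq> 1" and B: "\<forall>m::int. b * q powi m \<noteq> 1"
    and C: "\<forall>m::nat. c * q ^ m \<noteq> 1" and D: "\<forall>m::nat. d * q ^ m \<noteq> 1"
    using adm unfolding admissible_def by auto
  show "\<And>j. qinf q (a * q powi j) \<noteq> 0" by (rule adm_qinf[OF q A])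
  show "\<And>j. qinf q (b * q powi j) \<noteq> 0" by (rule adm_qinf[OF q B])
  show "qinf q a \<noteq> 0" using adm_qinf[OF q A, of 0] by simp
  show "qinf q b \<noteq> 0" using adm_qinf[OF q B, of 0] by simp
  show "qinf q c \<noteq> 0" using C by (intro qinf_nz[OF q(1)]) auto
  show "qinf q d \<noteq> 0" using D by (intro qinf_nz[OF q(1)]) auto
qed

lemma adm_conv:
  assumes q: "norm q < 1" "q \<noteq> 0" and adm: "admissible q (a, b, c, d)"
  shows "prefac q (a, b, c, d) * bilat_term q (a, b, c, d) S n = wq q a b c d n * S n"
proof -
  note nz = adm_parts[OF q adm]
  show ?thesis
  proof (cases "qinf q (c * q powi n) = 0 \<or> qinf q (d * q powi n) = 0")
    case True
    then show ?thesis unfolding prefac_def bilat_term_def wq_def qpoch_def by auto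
  next
    case False
    then show ?thesis unfolding prefac_def bilat_term_def wq_def qpoch_def
      using nz by (simp add: field_simps)
  qed
qed

lemma prefac_nz:
  assumes q: "norm q < 1" "q \<noteq> 0" and adm: "admissible q (a, b, c, d)"
  shows "prefac q (a, b, c, d) \<noteq> 0"
  using adm_parts[OF q adm] unfolding prefac_def by simp

lemma arg_help4: "(X::complex) * Y * (exp (- L) * p) = (X * Y / exp L) * p" by (simp add: exp_minus divide_inverse mult_ac)

lemma fac_help: "(c1::complex) * (k * A) + c2 * (k * B) - c3 * (k * C) = k * (c1 * A + c2 * B - c3 * C)"
  by (simp add: algebra_simps)
lemma inv_help: "(e::complex) * (p * b) = G \<Longrightarrow> e * p \<noteq> 0 \<Longrightarrow> inverse (e * p) * G = b"
  by (auto simp: field_simps)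

lemma ca_help1: "(C::complex) * (e * p) / t * i = C * e / t * (p * i)" by (simp add: divide_inverse mult_ac)
lemma cb_help1: "((e::complex) * p) / x * i = e / x * (p * i)" by (simp add: divide_inverse mult_ac)
lemma ca_help2: "(X::complex) * Y * (exp (- L) * p) * i = X * Y / exp L * (p * i)" by (simp add: exp_minus divide_inverse mult_ac)

locale sett =
  fixes q Lq t1 t2 hp1 hp2 lp1 lp2 :: complex and ap1 ap2 bp :: real and N :: nat and E0 al1 :: complex
  assumes hq: "exp Lq = q" "0 < norm q" "norm q < 1" and ht: "t1 \<noteq> 0" "t2 \<noteq> 0"
  and hN: "(hp1 - hp2 - lp1 + lp2 + of_real ap1 - of_real ap2 + of_real bp - 2) / 2 = of_nat N"
  and hbp: "bp < 0" and hap: "ap1 < ap2"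
  and hroot: "cpoly Lq t1 t2 lp1 hp2 hp1 lp2 (of_real ap1) (of_real ap2) (of_real bp) N E0 = 0"
begin

abbreviation "Q \<equiv> qpw Lq"

lemma hp1_eq: "hp1 = hp2 + lp1 - lp2 - of_real ap1 + of_real ap2 - of_real bp + 2 * of_nat N + 2"
  using hN by (simp add: field_simps)

lemma lam_eq: "lam1 lp1 hp2 hp1 lp2 (of_real ap1) (of_real ap2) (of_real bp) = - of_nat N - of_real ap2"
  unfolding lam1_def hp1_eq by (simp add: field_simps)

lemma Qinv: "Q a * Q (- a) = 1"
  by (simp add: qpw_minus)

definition "kx = t1 * t2 * Q (1/2) * Q (1/2) * Q lp1 * Q hp2 * Q (of_nat N) * Q (of_real ap2)"
definition "Yh = Q lp1 * t1 + Q hp2 * t2"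
definition "Yl = Q (1/2) * Q (1/2) * Q (1/2) * Q (1/2) * Q hp2 * Q lp1 * Q (- lp2) * Q (- of_real ap1) * Q (of_real ap2) * Q (- of_real bp) * Q (of_nat N) * Q (of_nat N) * t1 + Q lp2 * t2"
definition "U1 s = Q (1/2) * Q (1/2) * Q (- of_real bp) * (kx * inverse s - Q (1/2) * Q (of_nat N) * Q (of_real ap2) * Yh + Q (of_nat N) * Q (of_real ap2) * s)"
definition "W1 s = - kx * (1 + Q (- of_real bp)) * inverse s - (Q (of_real ap1) + Q (of_real ap2)) * s"
definition "V1 s = Q (- (1/2)) * Q (- (1/2)) * Q (of_real bp) * (kx * Q (- of_real bp) * inverse s - Q (of_real ap1) * Q (- of_nat N) * Q (- (1/2)) * Yl + Q (of_real ap1) * Q (- of_nat N) * s)"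

lemma mxk1: "Q (1 - of_nat k + lp1 + hp2 - (- of_nat N - of_real ap2)) = Q (1/2) * Q (1/2) * Q (hp2) * Q (lp1) * Q (of_real ap2) * Q (of_nat N) * Q (- of_nat k)"
proof -
  have e: "(1 - of_nat k + lp1 + hp2 - (- of_nat N - of_real ap2) :: complex) = (1/2) + (1/2) + (hp2) + (lp1) + (of_real ap2) + (of_nat N) + (- of_nat k)" by (simp add:  field_simps)
  show ?thesis by (simp only: e qpw_add qpw_0)
qed

lemma mxk2: "Q (of_nat k - of_real bp) = Q (- of_real bp) * Q (of_nat k)"
proof -
  have e: "(of_nat k - of_real bp :: complex) = (- of_real bp) + (of_nat k)" by (simp add:  field_simps)
  show ?thesis by (simp only: e qpw_add qpw_0)
qed

lemma my1: "Q (3/2 - of_nat (k + 1) - (- of_nat N - of_real ap2)) = Q (1/2) * Q (of_real ap2) * Q (of_nat N) * Q (- of_nat k)"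
proof -
  have e: "(3/2 - of_nat (k + 1) - (- of_nat N - of_real ap2) :: complex) = (1/2) + (of_real ap2) + (of_nat N) + (- of_nat k)" by (simp add:  field_simps)
  show ?thesis by (simp only: e qpw_add qpw_0)
qed

lemma my2: "Q (of_nat (k + 1) - 3/2 + (- of_nat N - of_real ap2) + of_real ap1 + of_real ap2) = Q (- (1/2)) * Q (of_real ap1) * Q (- of_nat N) * Q (of_nat k)"
proof -
  have e: "(of_nat (k + 1) - 3/2 + (- of_nat N - of_real ap2) + of_real ap1 + of_real ap2 :: complex) = (- (1/2)) + (of_real ap1) + (- of_nat N) + (of_nat k)" by (simp add:  field_simps)
  show ?thesis by (simp only: e qpw_add qpw_0)
qed

lemma mz1: "Q (2 - of_nat (k + 2) - (- of_nat N - of_real ap2)) = Q (of_real ap2) * Q (of_nat N) * Q (- of_nat k)"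
proof -
  have e: "(2 - of_nat (k + 2) - (- of_nat N - of_real ap2) :: complex) = (of_real ap2) + (of_nat N) + (- of_nat k)" by (simp add:  field_simps)
  show ?thesis by (simp only: e qpw_add qpw_0)
qed

lemma mz2: "Q (of_nat (k + 2) - 2 + (- of_nat N - of_real ap2) + of_real ap1) = Q (of_real ap1) * Q (- of_real ap2) * Q (- of_nat N) * Q (of_nat k)"
proof -
  have e: "(of_nat (k + 2) - 2 + (- of_nat N - of_real ap2) + of_real ap1 :: complex) = (of_real ap1) + (- of_real ap2) + (- of_nat N) + (of_nat k)" by (simp add:  field_simps)
  show ?thesis by (simp only: e qpw_add qpw_0)
qed

lemma mz3: "Q (of_nat (k + 2) - 2 + (- of_nat N - of_real ap2) + of_real ap2) = Q (- of_nat N) * Q (of_nat k)"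
proof -
  have e: "(of_nat (k + 2) - 2 + (- of_nat N - of_real ap2) + of_real ap2 :: complex) = (- of_nat N) + (of_nat k)" by (simp add:  field_simps)
  show ?thesis by (simp only: e qpw_add qpw_0)
qed

lemma mnu1m: "Q (- (- of_real bp + 1 + of_nat k)) = Q (- (1/2)) * Q (- (1/2)) * Q (of_real bp) * Q (- of_nat k)"
proof -
  have e: "(- (- of_real bp + 1 + of_nat k) :: complex) = (- (1/2)) + (- (1/2)) + (of_real bp) + (- of_nat k)" by (simp add:  field_simps)
  show ?thesis by (simp only: e qpw_add qpw_0)
qed

lemma mnu1: "Q (- of_real bp + 1 + of_nat k) = Q (1/2) * Q (1/2) * Q (- of_real bp) * Q (of_nat k)"
proof -
  have e: "(- of_real bp + 1 + of_nat k :: complex) = (1/2) + (1/2) + (- of_real bp) + (of_nat k)" by (simp add:  field_simps)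
  show ?thesis by (simp only: e qpw_add qpw_0)
qed

lemma mhp1: "Q hp1 = Q (1/2) * Q (1/2) * Q (1/2) * Q (1/2) * Q hp2 * Q lp1 * Q (- lp2) * Q (- of_real ap1) * Q (of_real ap2) * Q (- of_real bp) * Q (of_nat N) * Q (of_nat N)"
proof -
  have e: "hp1 = (1/2) + (1/2) + (1/2) + (1/2) + hp2 + lp1 + (- lp2) + (- of_real ap1) + (of_real ap2) + (- of_real bp) + (of_nat N) + (of_nat N)"
    by (simp add: hp1_eq field_simps)
  show ?thesis by (simp only: e qpw_add)
qed

lemma xs_unf: "xs Lq t1 t2 lp1 hp2 hp1 lp2 (of_real ap1) (of_real ap2) (of_real bp) k = t1 * t2 * Q (1 - of_nat k + lp1 + hp2 - (- of_nat N - of_real ap2)) * (1 - Q (of_nat k)) * (1 - Q (of_nat k - of_real bp))"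
  by (simp only: xs_def Let_def lam_eq)
lemma ys_unf: "ys Lq t1 t2 lp1 hp2 hp1 lp2 (of_real ap1) (of_real ap2) (of_real bp) (k+1) = Q (3/2 - of_nat (k + 1) - (- of_nat N - of_real ap2)) * (Q lp1 * t1 + Q hp2 * t2) + Q (of_nat (k + 1) - 3/2 + (- of_nat N - of_real ap2) + of_real ap1 + of_real ap2) * (Q hp1 * t1 + Q lp2 * t2)"
  by (simp only: ys_def Let_def lam_eq)
lemma zs_unf: "zs Lq t1 t2 lp1 hp2 hp1 lp2 (of_real ap1) (of_real ap2) (of_real bp) (k+2) = Q (2 - of_nat (k + 2) - (- of_nat N - of_real ap2)) * (1 - Q (of_nat (k + 2) - 2 + (- of_nat N - of_real ap2) + of_real ap1)) * (1 - Q (of_nat (k + 2) - 2 + (- of_nat N - of_real ap2) + of_real ap2))"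
  by (simp only: zs_def Let_def lam_eq)

lemma R1:
  assumes s: "s \<noteq> 0"
  shows "U1 s * Q (- (- of_real bp + 1 + of_nat k)) + W1 s + V1 s * Q (- of_real bp + 1 + of_nat k)
    = xs Lq t1 t2 lp1 hp2 hp1 lp2 (of_real ap1) (of_real ap2) (of_real bp) k * inverse s
      - ys Lq t1 t2 lp1 hp2 hp1 lp2 (of_real ap1) (of_real ap2) (of_real bp) (k+1)
      + s * zs Lq t1 t2 lp1 hp2 hp1 lp2 (of_real ap1) (of_real ap2) (of_real bp) (k+2)"
proof -
  have r: "s * inverse s = 1" using s by simp
  show ?thesis
    unfolding xs_unf ys_unf zs_unf U1_def V1_def W1_def kx_def Yh_def Yl_def
    unfolding mxk1 mxk2 my1 my2 mz1 mz2 mz3 mnu1m mnu1 mhp1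
    using r Qinv[of "1/2"] Qinv[of hp2] Qinv[of lp1] Qinv[of lp2] Qinv[of "of_real ap1"] Qinv[of "of_real ap2"]
      Qinv[of "of_real bp"] Qinv[of "of_nat N"] Qinv[of "of_nat k"]
    by algebra
qed


definition "U2 s = Q (- of_real ap1) * Q (of_real ap2) * Q (1/2) * Q (1/2) * Q (of_nat N) * (kx * Q (- of_real bp) * s - Q (of_real ap1) * Q (- of_nat N) * Q (- (1/2)) * Yl + Q (of_real ap1) * Q (- of_nat N) * inverse s)"
definition "W2 s = - kx * (1 + Q (- of_real bp)) * s - (Q (of_real ap1) + Q (of_real ap2)) * inverse s"
definition "V2 s = Q (of_real ap1) * Q (- of_real ap2) * Q (- (1/2)) * Q (- (1/2)) * Q (- of_nat N) * (kx * s - Q (1/2) * Q (of_nat N) * Q (of_real ap2) * Yh + Q (of_nat N) * Q (of_real ap2) * inverse s)"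

lemma mnu2m: "Q (- (- of_real ap1 + of_real ap2 + 1 + of_nat N - of_nat k)) = Q (- (1/2)) * Q (- (1/2)) * Q (of_real ap1) * Q (- of_real ap2) * Q (- of_nat N) * Q (of_nat k)"
proof -
  have e: "(- (- of_real ap1 + of_real ap2 + 1 + of_nat N - of_nat k) :: complex) = (- (1/2)) + (- (1/2)) + (of_real ap1) + (- of_real ap2) + (- of_nat N) + (of_nat k)" by (simp add:  field_simps)
  show ?thesis by (simp only: e qpw_add qpw_0)
qed

lemma mnu2: "Q (- of_real ap1 + of_real ap2 + 1 + of_nat N - of_nat k) = Q (1/2) * Q (1/2) * Q (- of_real ap1) * Q (of_real ap2) * Q (of_nat N) * Q (- of_nat k)"
proof -
  have e: "(- of_real ap1 + of_real ap2 + 1 + of_nat N - of_nat k :: complex) = (1/2) + (1/2) + (- of_real ap1) + (of_real ap2) + (of_nat N) + (- of_nat k)" by (simp add:  field_simps)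
  show ?thesis by (simp only: e qpw_add qpw_0)
qed

lemma R2:
  assumes s: "s \<noteq> 0"
  shows "U2 s * Q (- (- of_real ap1 + of_real ap2 + 1 + of_nat N - of_nat k)) + W2 s + V2 s * Q (- of_real ap1 + of_real ap2 + 1 + of_nat N - of_nat k)
    = xs Lq t1 t2 lp1 hp2 hp1 lp2 (of_real ap1) (of_real ap2) (of_real bp) k * s
      - ys Lq t1 t2 lp1 hp2 hp1 lp2 (of_real ap1) (of_real ap2) (of_real bp) (k+1)
      + inverse s * zs Lq t1 t2 lp1 hp2 hp1 lp2 (of_real ap1) (of_real ap2) (of_real bp) (k+2)"
proof -
  have r: "s * inverse s = 1" using s by simp
  show ?thesis
    unfolding xs_unf ys_unf zs_unf U2_def V2_def W2_def kx_def Yh_def Yl_def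
    unfolding mxk1 mxk2 my1 my2 mz1 mz2 mz3 mnu2m mnu2 mhp1
    using r Qinv[of "1/2"] Qinv[of hp2] Qinv[of lp1] Qinv[of lp2] Qinv[of "of_real ap1"] Qinv[of "of_real ap2"]
      Qinv[of "of_real bp"] Qinv[of "of_nat N"] Qinv[of "of_nat k"]
    by algebra
qed


abbreviation "XX \<equiv> xs Lq t1 t2 lp1 hp2 hp1 lp2 (of_real ap1) (of_real ap2) (of_real bp)"
abbreviation "YY \<equiv> ys Lq t1 t2 lp1 hp2 hp1 lp2 (of_real ap1) (of_real ap2) (of_real bp)"
abbreviation "ZZ \<equiv> zs Lq t1 t2 lp1 hp2 hp1 lp2 (of_real ap1) (of_real ap2) (of_real bp)"
definition "cc k = cseq Lq t1 t2 lp1 hp2 hp1 lp2 (of_real ap1) (of_real ap2) (of_real bp) E0 k"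
definition "P1 \<sigma> = (\<Sum>k\<le>N. cc k * exp ((- of_real bp + 1 + of_nat k) * \<sigma>))"
definition "P2 \<sigma> = (\<Sum>k\<le>N. cc k * exp ((- of_real ap1 + of_real ap2 + 1 + of_nat N - of_nat k) * \<sigma>))"

lemma ReLq: "Re Lq < 0"
proof -
  have "norm q = exp (Re Lq)" using hq(1) by (metis norm_exp_eq_Re)
  then show ?thesis using hq(3) by simp
qed

lemma q_nz: "q \<noteq> 0" using hq(2) by auto

lemma XX0: "XX 0 = 0" unfolding xs_def Let_def by simp

lemma XXnz: assumes "1 \<le> n" shows "XX n \<noteq> 0"
proof -
  have "norm (Q (of_nat n)) < 1"
  proof -
    have "norm (Q (of_nat n)) = exp (real n * Re Lq)" unfolding qpw_def by simp
    also have "\<dots> < 1" using ReLq assms by (simp add: mult_pos_neg)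
    finally show ?thesis .
  qed
  moreover have "norm (Q (of_nat n - of_real bp)) < 1"
  proof -
    have "norm (Q (of_nat n - of_real bp)) = exp ((real n - bp) * Re Lq)" unfolding qpw_def by (simp add: left_diff_distrib)
    also have "\<dots> < 1" using ReLq assms hbp by (simp add: mult_pos_neg)
    finally show ?thesis .
  qed
  ultimately have "1 - Q (of_nat n) \<noteq> 0" "1 - Q (of_nat n - of_real bp) \<noteq> 0" by auto
  then show ?thesis unfolding xs_def Let_def using ht by simp
qed

lemma ZZN: "ZZ (N+2) = 0"
  unfolding zs_def Let_def lam_eq by simp

lemma cfin0: "cfin XX YY ZZ N E0 = 0"
  using hroot unfolding cpoly_def .

lemma crec_inst:
  assumes "s \<noteq> 0"
  shows "(\<Sum>k\<le>N. cc k * s ^ k * (XX k / s - E0 - YY (k+1) + s * ZZ (k+2))) = 0"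
  unfolding cc_def cseq_def
  by (rule crec_sum_zero[OF XX0 XXnz assms cfin0 ZZN]) simp

lemma exp_shift_m: "exp (\<nu> * (\<sigma> - Lq)) = exp (\<nu> * \<sigma>) * Q (- \<nu>)"
  unfolding qpw_def by (simp add: right_diff_distrib exp_diff exp_minus field_simps)
lemma exp_shift_p: "exp (\<nu> * (\<sigma> + Lq)) = exp (\<nu> * \<sigma>) * Q \<nu>"
  unfolding qpw_def by (simp add: distrib_left exp_add mult.commute)

lemma LP1:
  "U1 (exp \<sigma>) * P1 (\<sigma> - Lq) + (W1 (exp \<sigma>) - E0) * P1 \<sigma> + V1 (exp \<sigma>) * P1 (\<sigma> + Lq) = 0"
proof -
  define s where "s = exp \<sigma>"
  have s0: "s \<noteq> 0" unfolding s_def by simp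
  have ek: "exp ((- of_real bp + 1 + of_nat k) * \<sigma>) = exp ((- of_real bp + 1) * \<sigma>) * s ^ k" for k
  proof -
    have "(- of_real bp + 1 + of_nat k) * \<sigma> = (- of_real bp + 1) * \<sigma> + of_nat k * \<sigma>" by (simp add: algebra_simps)
    then show ?thesis unfolding s_def by (simp only: exp_add exp_of_nat_mult)
  qed
  have "U1 s * P1 (\<sigma> - Lq) + (W1 s - E0) * P1 \<sigma> + V1 s * P1 (\<sigma> + Lq)
      = (\<Sum>k\<le>N. cc k * exp ((- of_real bp + 1 + of_nat k) * \<sigma>) *
          (U1 s * Q (- (- of_real bp + 1 + of_nat k)) + W1 s + V1 s * Q (- of_real bp + 1 + of_nat k) - E0))"
    unfolding P1_def exp_shift_m exp_shift_p sum_distrib_left sum.distrib[symmetric]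
    by (rule sum.cong) (simp_all add: algebra_simps)
  also have "\<dots> = (\<Sum>k\<le>N. exp ((- of_real bp + 1) * \<sigma>) * (cc k * s ^ k * (XX k / s - E0 - YY (k+1) + s * ZZ (k+2))))"
    by (rule sum.cong, simp, unfold R1[OF s0] ek) (simp add: divide_inverse algebra_simps)
  also have "\<dots> = 0" unfolding sum_distrib_left[symmetric] crec_inst[OF s0] by simp
  finally show ?thesis unfolding s_def .
qed

lemma LP2:
  "U2 (exp \<sigma>) * P2 (\<sigma> - Lq) + (W2 (exp \<sigma>) - E0) * P2 \<sigma> + V2 (exp \<sigma>) * P2 (\<sigma> + Lq) = 0"
proof -
  define s where "s = exp \<sigma>"
  have s0: "s \<noteq> 0" unfolding s_def by simp
  have is0: "inverse s \<noteq> 0" using s0 by simp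
  have ek: "exp ((- of_real ap1 + of_real ap2 + 1 + of_nat N - of_nat k) * \<sigma>) = exp ((- of_real ap1 + of_real ap2 + 1 + of_nat N) * \<sigma>) * inverse s ^ k" for k
  proof -
    have "exp ((- of_real ap1 + of_real ap2 + 1 + of_nat N - of_nat k) * \<sigma>) = exp ((- of_real ap1 + of_real ap2 + 1 + of_nat N) * \<sigma>) * exp (- (of_nat k * \<sigma>))"
      by (simp add: left_diff_distrib exp_diff exp_minus divide_inverse)
    also have "exp (- (of_nat k * \<sigma>)) = inverse s ^ k"
      unfolding s_def by (simp add: exp_minus exp_of_nat_mult power_inverse)
    finally show ?thesis .
  qed
  have "U2 s * P2 (\<sigma> - Lq) + (W2 s - E0) * P2 \<sigma> + V2 s * P2 (\<sigma> + Lq)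
      = (\<Sum>k\<le>N. cc k * exp ((- of_real ap1 + of_real ap2 + 1 + of_nat N - of_nat k) * \<sigma>) *
          (U2 s * Q (- (- of_real ap1 + of_real ap2 + 1 + of_nat N - of_nat k)) + W2 s + V2 s * Q (- of_real ap1 + of_real ap2 + 1 + of_nat N - of_nat k) - E0))"
    unfolding P2_def exp_shift_m exp_shift_p sum_distrib_left sum.distrib[symmetric]
    by (rule sum.cong) (simp_all add: algebra_simps)
  also have "\<dots> = (\<Sum>k\<le>N. exp ((- of_real ap1 + of_real ap2 + 1 + of_nat N) * \<sigma>) * (cc k * inverse s ^ k * (XX k / inverse s - E0 - YY (k+1) + inverse s * ZZ (k+2))))"
    by (rule sum.cong, simp, unfold R2[OF s0] ek) (simp add: divide_inverse algebra_simps)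
  also have "\<dots> = 0" unfolding sum_distrib_left[symmetric] crec_inst[OF is0] by simp
  finally show ?thesis unfolding s_def .
qed


definition "h1 = hp1 - hp2 + lp2 - 1 - of_nat N"
definition "h2 = lp2 - 1 - of_nat N"
definition "al2 = al1 - of_real ap1 + of_real ap2 + hp2 - lp2 + 1 + of_nat N"
definition "be = hp1 - lp1 + of_real ap1 - of_real ap2 - 1 - of_nat N"

lemma m_cE1: "Q (h1 + 1/2) = Q (1/2) * Q (1/2) * Q (1/2) * Q (lp1) * Q (- of_real ap1) * Q (of_real ap2) * Q (- of_real bp) * Q (of_nat N)"
proof -
  have e: "(h1 + 1/2 :: complex) = (1/2) + (1/2) + (1/2) + (lp1) + (- of_real ap1) + (of_real ap2) + (- of_real bp) + (of_nat N)" unfolding h1_def h2_def al2_def be_def by (simp add: hp1_eq field_simps)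
  show ?thesis by (simp only: e qpw_add qpw_0)
qed

lemma m_cE2: "Q (h2 + 1/2) = Q (- (1/2)) * Q (lp2) * Q (- of_nat N)"
proof -
  have e: "(h2 + 1/2 :: complex) = (- (1/2)) + (lp2) + (- of_nat N)" unfolding h1_def h2_def al2_def be_def by (simp add: hp1_eq field_simps)
  show ?thesis by (simp only: e qpw_add qpw_0)
qed

lemma m_cF1: "Q (lp1 - 1/2) = Q (- (1/2)) * Q (lp1)"
proof -
  have e: "(lp1 - 1/2 :: complex) = (- (1/2)) + (lp1)" unfolding h1_def h2_def al2_def be_def by (simp add: hp1_eq field_simps)
  show ?thesis by (simp only: e qpw_add qpw_0)
qed

lemma m_cF2: "Q (lp2 - 1/2) = Q (- (1/2)) * Q (lp2)"
proof -
  have e: "(lp2 - 1/2 :: complex) = (- (1/2)) + (lp2)" unfolding h1_def h2_def al2_def be_def by (simp add: hp1_eq field_simps)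
  show ?thesis by (simp only: e qpw_add qpw_0)
qed

lemma m_cA12: "Q (al1 + al2) = Q (1/2) * Q (1/2) * Q (hp2) * Q (- lp2) * Q (- of_real ap1) * Q (of_real ap2) * Q (al1) * Q (al1) * Q (of_nat N)"
proof -
  have e: "(al1 + al2 :: complex) = (1/2) + (1/2) + (hp2) + (- lp2) + (- of_real ap1) + (of_real ap2) + (al1) + (al1) + (of_nat N)" unfolding h1_def h2_def al2_def be_def by (simp add: hp1_eq field_simps)
  show ?thesis by (simp only: e qpw_add qpw_0)
qed

lemma m_cA2: "Q (al2) = Q (1/2) * Q (1/2) * Q (hp2) * Q (- lp2) * Q (- of_real ap1) * Q (of_real ap2) * Q (al1) * Q (of_nat N)"
proof -
  have e: "(al2 :: complex) = (1/2) + (1/2) + (hp2) + (- lp2) + (- of_real ap1) + (of_real ap2) + (al1) + (of_nat N)" unfolding h1_def h2_def al2_def be_def by (simp add: hp1_eq field_simps)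
  show ?thesis by (simp only: e qpw_add qpw_0)
qed

lemma m_cK1: "Q ((h1 + h2 + lp1 + lp2 + al1 + al2) / 2 + be / 2) = Q (1/2) * Q (1/2) * Q (hp2) * Q (lp1) * Q (- of_real ap1) * Q (of_real ap2) * Q (- of_real bp) * Q (al1) * Q (of_nat N)"
proof -
  have e: "((h1 + h2 + lp1 + lp2 + al1 + al2) / 2 + be / 2 :: complex) = (1/2) + (1/2) + (hp2) + (lp1) + (- of_real ap1) + (of_real ap2) + (- of_real bp) + (al1) + (of_nat N)" unfolding h1_def h2_def al2_def be_def by (simp add: hp1_eq field_simps)
  show ?thesis by (simp only: e qpw_add qpw_0)
qed

lemma m_cK2: "Q ((h1 + h2 + lp1 + lp2 + al1 + al2) / 2 + - be / 2) = Q (lp1) * Q (lp2) * Q (- of_real ap1) * Q (of_real ap2) * Q (al1)"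
proof -
  have e: "((h1 + h2 + lp1 + lp2 + al1 + al2) / 2 + - be / 2 :: complex) = (lp1) + (lp2) + (- of_real ap1) + (of_real ap2) + (al1)" unfolding h1_def h2_def al2_def be_def by (simp add: hp1_eq field_simps)
  show ?thesis by (simp only: e qpw_add qpw_0)
qed

lemma m_lamK: "Q (al1 - of_real ap1) = Q (- of_real ap1) * Q (al1)"
proof -
  have e: "(al1 - of_real ap1 :: complex) = (- of_real ap1) + (al1)" unfolding h1_def h2_def al2_def be_def by (simp add: hp1_eq field_simps)
  show ?thesis by (simp only: e qpw_add qpw_0)
qed

lemma m_cAa: "Q (- hp1 + 1/2) = Q (- (1/2)) * Q (- (1/2)) * Q (- (1/2)) * Q (- hp2) * Q (- lp1) * Q (lp2) * Q (of_real ap1) * Q (- of_real ap2) * Q (of_real bp) * Q (- of_nat N) * Q (- of_nat N)"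
proof -
  have e: "(- hp1 + 1/2 :: complex) = (- (1/2)) + (- (1/2)) + (- (1/2)) + (- hp2) + (- lp1) + (lp2) + (of_real ap1) + (- of_real ap2) + (of_real bp) + (- of_nat N) + (- of_nat N)" unfolding h1_def h2_def al2_def be_def by (simp add: hp1_eq field_simps)
  show ?thesis by (simp only: e qpw_add qpw_0)
qed

lemma m_cAc: "Q (- lp1 + 1/2) = Q (1/2) * Q (- lp1)"
proof -
  have e: "(- lp1 + 1/2 :: complex) = (1/2) + (- lp1)" unfolding h1_def h2_def al2_def be_def by (simp add: hp1_eq field_simps)
  show ?thesis by (simp only: e qpw_add qpw_0)
qed

lemma m_cDc: "Q (- hp2 + lp2 - of_nat N) = Q (- hp2) * Q (lp2) * Q (- of_nat N)"
proof -
  have e: "(- hp2 + lp2 - of_nat N :: complex) = (- hp2) + (lp2) + (- of_nat N)" unfolding h1_def h2_def al2_def be_def by (simp add: hp1_eq field_simps)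
  show ?thesis by (simp only: e qpw_add qpw_0)
qed

lemma m_cAc2: "Q (lp1 + 1/2) = Q (1/2) * Q (lp1)"
proof -
  have e: "(lp1 + 1/2 :: complex) = (1/2) + (lp1)" unfolding h1_def h2_def al2_def be_def by (simp add: hp1_eq field_simps)
  show ?thesis by (simp only: e qpw_add qpw_0)
qed

lemma m_cBc2: "Q (hp2 - lp2 + of_nat N + 1) = Q (1/2) * Q (1/2) * Q (hp2) * Q (- lp2) * Q (of_nat N)"
proof -
  have e: "(hp2 - lp2 + of_nat N + 1 :: complex) = (1/2) + (1/2) + (hp2) + (- lp2) + (of_nat N)" unfolding h1_def h2_def al2_def be_def by (simp add: hp1_eq field_simps)
  show ?thesis by (simp only: e qpw_add qpw_0)
qed

lemma m_cCc2: "Q (hp1 + 1/2) = Q (1/2) * Q (1/2) * Q (1/2) * Q (1/2) * Q (1/2) * Q (hp2) * Q (lp1) * Q (- lp2) * Q (- of_real ap1) * Q (of_real ap2) * Q (- of_real bp) * Q (of_nat N) * Q (of_nat N)"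
proof -
  have e: "(hp1 + 1/2 :: complex) = (1/2) + (1/2) + (1/2) + (1/2) + (1/2) + (hp2) + (lp1) + (- lp2) + (- of_real ap1) + (of_real ap2) + (- of_real bp) + (of_nat N) + (of_nat N)" unfolding h1_def h2_def al2_def be_def by (simp add: hp1_eq field_simps)
  show ?thesis by (simp only: e qpw_add qpw_0)
qed

lemma m_cX2: "Q (al1 + hp2 - lp2 + of_nat N) = Q (hp2) * Q (- lp2) * Q (al1) * Q (of_nat N)"
proof -
  have e: "(al1 + hp2 - lp2 + of_nat N :: complex) = (hp2) + (- lp2) + (al1) + (of_nat N)" unfolding h1_def h2_def al2_def be_def by (simp add: hp1_eq field_simps)
  show ?thesis by (simp only: e qpw_add qpw_0)
qed

lemma m_cX2m: "Q (- al1 - hp2 + lp2 - of_nat N) = Q (- hp2) * Q (lp2) * Q (- al1) * Q (- of_nat N)"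
proof -
  have e: "(- al1 - hp2 + lp2 - of_nat N :: complex) = (- hp2) + (lp2) + (- al1) + (- of_nat N)" unfolding h1_def h2_def al2_def be_def by (simp add: hp1_eq field_simps)
  show ?thesis by (simp only: e qpw_add qpw_0)
qed


lemma A4nf: "A4 Lq t1 t2 h1 h2 lp1 lp2 al1 al2 be g u =
   inverse (exp u) * (exp u - Q (h1 + 1/2) * t1) * (exp u - Q (h2 + 1/2) * t2) * g (u - Lq)
 + Q (al1 + al2) * inverse (exp u) * (exp u - Q (lp1 - 1/2) * t1) * (exp u - Q (lp2 - 1/2) * t2) * g (u + Lq)
 - ((Q al1 + Q al2) * exp u + (Q ((h1 + h2 + lp1 + lp2 + al1 + al2) / 2 + be / 2) + Q ((h1 + h2 + lp1 + lp2 + al1 + al2) / 2 + - be / 2)) * t1 * t2 * inverse (exp u)) * g u"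
proof -
  have k: "Q ((h1 + h2 + lp1 + lp2 + al1 + al2) / 2) * (Q (be / 2) + Q (- be / 2)) = Q ((h1 + h2 + lp1 + lp2 + al1 + al2) / 2 + be / 2) + Q ((h1 + h2 + lp1 + lp2 + al1 + al2) / 2 + - be / 2)"
    by (simp only: qpw_add distrib_left)
  show ?thesis unfolding A4_def Let_def k by simp
qed

definition "K1 \<sigma> v = exp (- al1 * v) * Kg q (Q (- lp1 + 1/2) * exp \<sigma> / t1) (Q (- hp2 + lp2 - of_nat N) * exp \<sigma> / exp v) (Q (- hp1 + 1/2) * exp \<sigma> / t1) (exp \<sigma> / exp v)"

lemma Qhalf: "q = Q (1/2) * Q (1/2)"
proof -
  have "q = Q 1" using hq(1) by (simp add: qpw_def)
  also have "(1::complex) = 1/2 + 1/2" by simp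
  finally show ?thesis by (simp only: qpw_add)
qed
lemma Qinv_sym: "inverse (Q a) = Q (- a)" by (simp add: qpw_minus)

lemma KER1:
  fixes \<sigma> u :: complex
  defines "zc \<equiv> Q (- lp1 + 1/2) * exp \<sigma> / t1" and "zd \<equiv> Q (- hp2 + lp2 - of_nat N) * exp \<sigma> / exp u"
      and "za \<equiv> Q (- hp1 + 1/2) * exp \<sigma> / t1" and "zb \<equiv> exp \<sigma> / exp u"
  assumes Ca: "qinf q (za * inverse q) \<noteq> 0" and Cb: "qinf q (zb * inverse q) \<noteq> 0"
  shows "inverse (exp u) * (exp u - Q (h1 + 1/2) * t1) * (exp u - Q (h2 + 1/2) * t2) * K1 \<sigma> (u - Lq)
 + Q (al1 + al2) * inverse (exp u) * (exp u - Q (lp1 - 1/2) * t1) * (exp u - Q (lp2 - 1/2) * t2) * K1 \<sigma> (u + Lq)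
 - ((Q al1 + Q al2) * exp u + (Q ((h1 + h2 + lp1 + lp2 + al1 + al2) / 2 + be / 2) + Q ((h1 + h2 + lp1 + lp2 + al1 + al2) / 2 + - be / 2)) * t1 * t2 * inverse (exp u)) * K1 \<sigma> u
 = Q (al1 - of_real ap1) * (K1 (\<sigma> + Lq) u * U1 (exp (\<sigma> + Lq)) + K1 (\<sigma> - Lq) u * V1 (exp (\<sigma> - Lq)) + K1 \<sigma> u * W1 (exp \<sigma>))"
proof -
  have q0: "q \<noteq> 0" by (rule q_nz)
  note ff = five_forms[OF hq(3) q0 Ca Cb]
  define G where "G = exp (- al1 * u) * (qinf q (zc * q) * qinf q (zd * q) / (qinf q (za * inverse q) * qinf q (zb * inverse q)))"
  have eum: "exp (u - Lq) = exp u * inverse q" using hq(1) by (simp add: exp_diff divide_inverse)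
  have eup: "exp (u + Lq) = exp u * q" using hq(1) by (simp add: exp_add)
  have esp: "exp (\<sigma> + Lq) = exp \<sigma> * q" using hq(1) by (simp add: exp_add)
  have esm: "exp (\<sigma> - Lq) = exp \<sigma> * inverse q" using hq(1) by (simp add: exp_diff divide_inverse)
  have am: "exp (- al1 * (u - Lq)) = Q al1 * exp (- al1 * u)" unfolding qpw_def by (simp add: algebra_simps exp_add[symmetric])
  have ap: "exp (- al1 * (u + Lq)) = Q (- al1) * exp (- al1 * u)" unfolding qpw_def by (simp add: algebra_simps exp_add[symmetric])
  have Km: "K1 \<sigma> (u - Lq) = Q al1 * (G * ((1 - zc) * (1 - za * inverse q) * (1 - zb * inverse q) * (1 - zb)))"
  proof -
    have a: "Q (- hp2 + lp2 - of_nat N) * exp \<sigma> / exp (u - Lq) = zd * q" "exp \<sigma> / exp (u - Lq) = zb * q"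
      unfolding eum zd_def zb_def using q0 by (simp_all add: field_simps)
    show ?thesis unfolding K1_def am a zc_def[symmetric] za_def[symmetric] ff(2) G_def
      by (simp add: ac_simps)
  qed
  have Kp: "K1 \<sigma> (u + Lq) = Q (- al1) * (G * ((1 - zc) * (1 - zd * inverse q) * (1 - zd) * (1 - za * inverse q)))"
  proof -
    have a: "Q (- hp2 + lp2 - of_nat N) * exp \<sigma> / exp (u + Lq) = zd * inverse q" "exp \<sigma> / exp (u + Lq) = zb * inverse q"
      unfolding eup zd_def zb_def using q0 by (simp_all add: field_simps)
    show ?thesis unfolding K1_def ap a zc_def[symmetric] za_def[symmetric] ff(3) G_def
      by (simp add: ac_simps)
  qed
  have K0: "K1 \<sigma> u = G * ((1 - zc) * (1 - zd) * (1 - za * inverse q) * (1 - zb * inverse q))"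
    unfolding K1_def zc_def[symmetric] za_def[symmetric] zd_def[symmetric] zb_def[symmetric] ff(1) G_def
    by (simp add: ac_simps)
  have Kup: "K1 (\<sigma> + Lq) u = G * ((1 - za * inverse q) * (1 - za) * (1 - zb * inverse q) * (1 - zb))"
  proof -
    have a: "Q (- lp1 + 1/2) * exp (\<sigma> + Lq) / t1 = zc * q" "Q (- hp2 + lp2 - of_nat N) * exp (\<sigma> + Lq) / exp u = zd * q"
      "Q (- hp1 + 1/2) * exp (\<sigma> + Lq) / t1 = za * q" "exp (\<sigma> + Lq) / exp u = zb * q"
      unfolding esp zc_def zd_def za_def zb_def by (simp_all add: field_simps)
    show ?thesis unfolding K1_def a ff(4) G_def by (simp add: ac_simps)
  qed
  have Kdn: "K1 (\<sigma> - Lq) u = G * ((1 - zc * inverse q) * (1 - zc) * (1 - zd * inverse q) * (1 - zd))"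
  proof -
    have a: "Q (- lp1 + 1/2) * exp (\<sigma> - Lq) / t1 = zc * inverse q" "Q (- hp2 + lp2 - of_nat N) * exp (\<sigma> - Lq) / exp u = zd * inverse q"
      "Q (- hp1 + 1/2) * exp (\<sigma> - Lq) / t1 = za * inverse q" "exp (\<sigma> - Lq) / exp u = zb * inverse q"
      unfolding esm zc_def zd_def za_def zb_def by (simp_all add: field_simps)
    show ?thesis unfolding K1_def a ff(5) G_def by (simp add: ac_simps)
  qed
  show ?thesis
    unfolding Km Kp K0 Kup Kdn esp esm
    apply (rule glue)
    apply (rule KP1[where r="Q (1/2)" and jr="Q (- (1/2))" and ah="Q hp2" and jah="Q (- hp2)" and bl="Q lp1" and jbl="Q (- lp1)"
      and bm="Q lp2" and jbm="Q (- lp2)" and pa="Q (of_real ap1)" and jpa="Q (- of_real ap1)" and pc="Q (of_real ap2)" and jpc="Q (- of_real ap2)"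
      and pb="Q (of_real bp)" and jpb="Q (- of_real bp)" and ma="Q al1" and jma="Q (- al1)" and qN="Q (of_nat N)" and jqN="Q (- of_nat N)"
      and ta=t1 and jta="inverse t1" and tb=t2 and es="exp \<sigma>" and jes="inverse (exp \<sigma>)" and eu="exp u" and jeu="inverse (exp u)"])
    unfolding zc_def zd_def za_def zb_def U1_def V1_def W1_def kx_def Yh_def Yl_def
      m_cE1 m_cE2 m_cF1 m_cF2 m_cA12 m_cA2 m_cK1 m_cK2 m_lamK m_cAa m_cAc m_cDc
    apply (simp_all only: divide_inverse inverse_mult_distrib Qhalf Qinv_sym minus_minus Qinv right_inverse ht exp_not_eq_zero)
    apply (simp_all add: mult_ac ht)
    done
qed

definition "K2 \<sigma> v = exp ((- al1 - hp2 + lp2 - of_nat N) * v) * Kg q (Q (hp1 + 1/2) * t1 * exp \<sigma>) (exp Lq * exp v * exp \<sigma>) (Q (lp1 + 1/2) * t1 * exp \<sigma>) (Q (hp2 - lp2 + of_nat N + 1) * exp v * exp \<sigma>)"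

lemma KER2:
  fixes \<sigma> u :: complex
  defines "zc \<equiv> Q (hp1 + 1/2) * t1 * exp \<sigma>" and "zd \<equiv> exp Lq * exp u * exp \<sigma>"
      and "za \<equiv> Q (lp1 + 1/2) * t1 * exp \<sigma>" and "zb \<equiv> Q (hp2 - lp2 + of_nat N + 1) * exp u * exp \<sigma>"
  assumes Ca: "qinf q (za * inverse q) \<noteq> 0" and Cb: "qinf q (zb * inverse q) \<noteq> 0"
  shows "inverse (exp u) * (exp u - Q (h1 + 1/2) * t1) * (exp u - Q (h2 + 1/2) * t2) * K2 \<sigma> (u - Lq)
 + Q (al1 + al2) * inverse (exp u) * (exp u - Q (lp1 - 1/2) * t1) * (exp u - Q (lp2 - 1/2) * t2) * K2 \<sigma> (u + Lq)
 - ((Q al1 + Q al2) * exp u + (Q ((h1 + h2 + lp1 + lp2 + al1 + al2) / 2 + be / 2) + Q ((h1 + h2 + lp1 + lp2 + al1 + al2) / 2 + - be / 2)) * t1 * t2 * inverse (exp u)) * K2 \<sigma> u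
 = Q (al1 - of_real ap1) * (K2 (\<sigma> + Lq) u * U2 (exp (\<sigma> + Lq)) + K2 (\<sigma> - Lq) u * V2 (exp (\<sigma> - Lq)) + K2 \<sigma> u * W2 (exp \<sigma>))"
proof -
  have q0: "q \<noteq> 0" by (rule q_nz)
  note ff = five_forms[OF hq(3) q0 Ca Cb]
  define G where "G = exp ((- al1 - hp2 + lp2 - of_nat N) * u) * (qinf q (zc * q) * qinf q (zd * q) / (qinf q (za * inverse q) * qinf q (zb * inverse q)))"
  have eum: "exp (u - Lq) = exp u * inverse q" using hq(1) by (simp add: exp_diff divide_inverse)
  have eup: "exp (u + Lq) = exp u * q" using hq(1) by (simp add: exp_add)
  have esp: "exp (\<sigma> + Lq) = exp \<sigma> * q" using hq(1) by (simp add: exp_add)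
  have esm: "exp (\<sigma> - Lq) = exp \<sigma> * inverse q" using hq(1) by (simp add: exp_diff divide_inverse)
  have am: "exp ((- al1 - hp2 + lp2 - of_nat N) * (u - Lq)) = Q (al1 + hp2 - lp2 + of_nat N) * exp ((- al1 - hp2 + lp2 - of_nat N) * u)" unfolding qpw_def by (simp add: algebra_simps exp_add[symmetric])
  have ap: "exp ((- al1 - hp2 + lp2 - of_nat N) * (u + Lq)) = Q (- al1 - hp2 + lp2 - of_nat N) * exp ((- al1 - hp2 + lp2 - of_nat N) * u)" unfolding qpw_def by (simp add: algebra_simps exp_add[symmetric])
  have Km: "K2 \<sigma> (u - Lq) = Q (al1 + hp2 - lp2 + of_nat N) * (G * ((1 - zc) * (1 - zd * inverse q) * (1 - zd) * (1 - za * inverse q)))"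
  proof -
    have a: "exp Lq * exp (u - Lq) * exp \<sigma> = zd * inverse q" "Q (hp2 - lp2 + of_nat N + 1) * exp (u - Lq) * exp \<sigma> = zb * inverse q"
      unfolding eum zd_def zb_def using q0 by (simp_all add: field_simps)
    show ?thesis unfolding K2_def am a zc_def[symmetric] za_def[symmetric] ff(3) G_def
      by (simp add: ac_simps)
  qed
  have Kp: "K2 \<sigma> (u + Lq) = Q (- al1 - hp2 + lp2 - of_nat N) * (G * ((1 - zc) * (1 - za * inverse q) * (1 - zb * inverse q) * (1 - zb)))"
  proof -
    have a: "exp Lq * exp (u + Lq) * exp \<sigma> = zd * q" "Q (hp2 - lp2 + of_nat N + 1) * exp (u + Lq) * exp \<sigma> = zb * q"
      unfolding eup zd_def zb_def using q0 by (simp_all add: field_simps)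
    show ?thesis unfolding K2_def ap a zc_def[symmetric] za_def[symmetric] ff(2) G_def
      by (simp add: ac_simps)
  qed
  have K0: "K2 \<sigma> u = G * ((1 - zc) * (1 - zd) * (1 - za * inverse q) * (1 - zb * inverse q))"
    unfolding K2_def zc_def[symmetric] za_def[symmetric] zd_def[symmetric] zb_def[symmetric] ff(1) G_def
    by (simp add: ac_simps)
  have Kup: "K2 (\<sigma> + Lq) u = G * ((1 - za * inverse q) * (1 - za) * (1 - zb * inverse q) * (1 - zb))"
  proof -
    have a: "Q (hp1 + 1/2) * t1 * exp (\<sigma> + Lq) = zc * q" "exp Lq * exp u * exp (\<sigma> + Lq) = zd * q"
      "Q (lp1 + 1/2) * t1 * exp (\<sigma> + Lq) = za * q" "Q (hp2 - lp2 + of_nat N + 1) * exp u * exp (\<sigma> + Lq) = zb * q"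
      unfolding esp zc_def zd_def za_def zb_def by (simp_all add: field_simps)
    show ?thesis unfolding K2_def a ff(4) G_def by (simp add: ac_simps)
  qed
  have Kdn: "K2 (\<sigma> - Lq) u = G * ((1 - zc * inverse q) * (1 - zc) * (1 - zd * inverse q) * (1 - zd))"
  proof -
    have a: "Q (hp1 + 1/2) * t1 * exp (\<sigma> - Lq) = zc * inverse q" "exp Lq * exp u * exp (\<sigma> - Lq) = zd * inverse q"
      "Q (lp1 + 1/2) * t1 * exp (\<sigma> - Lq) = za * inverse q" "Q (hp2 - lp2 + of_nat N + 1) * exp u * exp (\<sigma> - Lq) = zb * inverse q"
      unfolding esm zc_def zd_def za_def zb_def by (simp_all add: field_simps)
    show ?thesis unfolding K2_def a ff(5) G_def by (simp add: ac_simps)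
  qed
  show ?thesis
    unfolding Km Kp K0 Kup Kdn esp esm
    apply (rule glue)
    apply (rule KP2[where r="Q (1/2)" and jr="Q (- (1/2))" and ah="Q hp2" and jah="Q (- hp2)" and bl="Q lp1" and jbl="Q (- lp1)"
      and bm="Q lp2" and jbm="Q (- lp2)" and pa="Q (of_real ap1)" and jpa="Q (- of_real ap1)" and pc="Q (of_real ap2)" and jpc="Q (- of_real ap2)"
      and pb="Q (of_real bp)" and jpb="Q (- of_real bp)" and ma="Q al1" and jma="Q (- al1)" and qN="Q (of_nat N)" and jqN="Q (- of_nat N)"
      and ta=t1 and jta="inverse t1" and tb=t2 and es="exp \<sigma>" and jes="inverse (exp \<sigma>)" and eu="exp u" and jeu="inverse (exp u)"])
    unfolding zc_def zd_def za_def zb_def U2_def V2_def W2_def kx_def Yh_def Yl_def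
      m_cE1 m_cE2 m_cF1 m_cF2 m_cA12 m_cA2 m_cK1 m_cK2 m_lamK m_cAc2 m_cBc2 m_cCc2 m_cX2 m_cX2m
    apply (simp_all only: divide_inverse inverse_mult_distrib Qhalf Qinv_sym minus_minus Qinv right_inverse ht exp_not_eq_zero hq(1))
    apply (simp_all add: mult_ac ht)
    done
qed


definition goodK :: "(complex \<Rightarrow> complex) \<Rightarrow> bool" where
  "goodK F \<longleftrightarrow> (\<forall>\<sigma>0. (\<lambda>n::int. F (\<sigma>0 + of_int n * Lq)) summable_on UNIV)"

lemma goodK_add: "goodK F \<Longrightarrow> goodK G \<Longrightarrow> goodK (\<lambda>\<sigma>. F \<sigma> + G \<sigma>)"
  unfolding goodK_def
proof (intro allI)
  fix \<sigma>0
  assume a: "\<forall>\<sigma>0. (\<lambda>n::int. F (\<sigma>0 + of_int n * Lq)) summable_on UNIV" and b: "\<forall>\<sigma>0. (\<lambda>n::int. G (\<sigma>0 + of_int n * Lq)) summable_on UNIV"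
  show "(\<lambda>n::int. F (\<sigma>0 + of_int n * Lq) + G (\<sigma>0 + of_int n * Lq)) summable_on UNIV"
    by (rule summable_on_add[OF a[rule_format] b[rule_format]])
qed
lemma goodK_diff: "goodK F \<Longrightarrow> goodK G \<Longrightarrow> goodK (\<lambda>\<sigma>. F \<sigma> - G \<sigma>)"
  unfolding goodK_def
proof (intro allI)
  fix \<sigma>0
  assume a: "\<forall>\<sigma>0. (\<lambda>n::int. F (\<sigma>0 + of_int n * Lq)) summable_on UNIV" and b: "\<forall>\<sigma>0. (\<lambda>n::int. G (\<sigma>0 + of_int n * Lq)) summable_on UNIV"
  have "(\<lambda>n::int. - G (\<sigma>0 + of_int n * Lq)) summable_on UNIV"
    using b[rule_format, of \<sigma>0] summable_on_uminus[of "\<lambda>n::int. G (\<sigma>0 + of_int n * Lq)" UNIV] by simp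
  from summable_on_add[OF a[rule_format] this] show "(\<lambda>n::int. F (\<sigma>0 + of_int n * Lq) - G (\<sigma>0 + of_int n * Lq)) summable_on UNIV"
    by simp
qed
lemma goodK_cmult: "goodK F \<Longrightarrow> goodK (\<lambda>\<sigma>. c * F \<sigma>)"
  unfolding goodK_def
proof (intro allI)
  fix \<sigma>0
  assume a: "\<forall>\<sigma>0. (\<lambda>n::int. F (\<sigma>0 + of_int n * Lq)) summable_on UNIV"
  show "(\<lambda>n::int. c * F (\<sigma>0 + of_int n * Lq)) summable_on UNIV"
    by (rule summable_on_cmult_right[OF a[rule_format]])
qed
lemma goodK_cmult_right: "goodK F \<Longrightarrow> goodK (\<lambda>\<sigma>. F \<sigma> * c)"
proof -
  assume "goodK F"
  then have "goodK (\<lambda>\<sigma>. c * F \<sigma>)" by (rule goodK_cmult)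
  moreover have "(\<lambda>\<sigma>. c * F \<sigma>) = (\<lambda>\<sigma>. F \<sigma> * c)" by (simp add: mult.commute)
  ultimately show ?thesis by simp
qed
lemma goodK_0: "goodK (\<lambda>\<sigma>. 0)" unfolding goodK_def by simp
lemma goodK_sum: "(\<And>k. k \<in> A \<Longrightarrow> goodK (F k)) \<Longrightarrow> finite A \<Longrightarrow> goodK (\<lambda>\<sigma>. \<Sum>k\<in>A. F k \<sigma>)"
proof (induction A rule: infinite_finite_induct)
  case (infinite A) then show ?case by simp
next
  case empty then show ?case by (simp add: goodK_0)
next
  case (insert x F')
  have "goodK (\<lambda>\<sigma>. F x \<sigma> + (\<Sum>k\<in>F'. F k \<sigma>))"
    by (rule goodK_add) (use insert in auto)
  then show ?case using insert by simp
qed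
lemma goodK_shift: "goodK F \<Longrightarrow> goodK (\<lambda>\<sigma>. F (\<sigma> + c))"
  unfolding goodK_def
proof
  assume a: "\<forall>\<sigma>0. (\<lambda>n::int. F (\<sigma>0 + of_int n * Lq)) summable_on UNIV"
  fix \<sigma>0
  have "(\<lambda>n::int. F ((\<sigma>0 + c) + of_int n * Lq)) summable_on UNIV" using a by blast
  then show "(\<lambda>n::int. F (\<sigma>0 + of_int n * Lq + c)) summable_on UNIV"
    by (simp add: ac_simps)
qed

definition "del = real N + 2 - ap1 + ap2 - bp"

lemma exp_lattice: "exp (\<sigma>0 + of_int n * Lq) = exp \<sigma>0 * q powi n"
  by (simp only: exp_add exp_of_int_mult hq(1))
lemma exp_nu_lattice: "exp (of_real \<nu> * (\<sigma>0 + of_int n * Lq)) = exp (of_real \<nu> * \<sigma>0) * exp (of_real \<nu> * Lq) powi n"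
proof -
  have "of_real \<nu> * (\<sigma>0 + of_int n * Lq) = of_real \<nu> * \<sigma>0 + of_int n * (of_real \<nu> * Lq)" by (simp add: algebra_simps)
  then show ?thesis by (simp only: exp_add exp_of_int_mult)
qed

lemma norm_expnu: "norm (exp (of_real \<nu> * Lq)) = exp (\<nu> * Re Lq)" by simp

lemma wq_good:
  assumes a0: "a0 \<noteq> 0" "b0 \<noteq> 0" and nu: "0 < \<nu>" "\<nu> < del"
    and cd: "c0 * d0 = Q (of_real del) * (a0 * b0)"
  shows "(\<lambda>n::int. wq q a0 b0 c0 d0 n * exp (of_real \<nu> * Lq) powi n) summable_on UNIV"
proof (rule wq_summable[OF hq(3) q_nz a0])
  show "norm (exp (of_real \<nu> * Lq)) < 1" using nu ReLq by (simp add: mult_pos_neg)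
  have "norm (c0 * d0) = exp (del * Re Lq) * norm (a0 * b0)" unfolding cd qpw_def by (simp add: norm_mult)
  also have "\<dots> < exp (\<nu> * Re Lq) * norm (a0 * b0)"
  proof (rule mult_strict_right_mono)
    have "del * Re Lq < \<nu> * Re Lq" by (rule mult_strict_right_mono_neg[OF nu(2) ReLq])
    then show "exp (del * Re Lq) < exp (\<nu> * Re Lq)" by simp
    show "0 < norm (a0 * b0)" using a0 by simp
  qed
  finally show "norm (c0 * d0) < norm (exp (of_real \<nu> * Lq)) * norm (a0 * b0)" by simp
qed

lemma goodK1:
  assumes nu: "0 < \<nu>" "\<nu> < del"
  shows "goodK (\<lambda>\<sigma>. K1 \<sigma> v * exp (of_real \<nu> * \<sigma>))"
  unfolding goodK_def
proof
  fix \<sigma>0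
  define a0 where "a0 = Q (- hp1 + 1/2) * exp \<sigma>0 / t1"
  define b0 where "b0 = exp \<sigma>0 / exp v"
  define c0 where "c0 = Q (- lp1 + 1/2) * exp \<sigma>0 / t1"
  define d0 where "d0 = Q (- hp2 + lp2 - of_nat N) * exp \<sigma>0 / exp v"
  have QQ: "Q (- lp1 + 1/2) * Q (- hp2 + lp2 - of_nat N) = Q (of_real del) * Q (- hp1 + 1/2)"
  proof -
    have "(- lp1 + 1/2) + (- hp2 + lp2 - of_nat N) = of_real del + (- hp1 + 1/2)"
      unfolding del_def hp1_eq by (simp add: field_simps)
    then show ?thesis by (metis qpw_add)
  qed
  have cd: "c0 * d0 = Q (of_real del) * (a0 * b0)"
    unfolding a0_def b0_def c0_def d0_def using cd_help1[OF QQ] .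
  have s: "(\<lambda>n::int. wq q a0 b0 c0 d0 n * exp (of_real \<nu> * Lq) powi n) summable_on UNIV"
    by (rule wq_good[OF _ _ nu cd]) (use ht in \<open>simp_all add: a0_def b0_def\<close>)
  have e: "K1 (\<sigma>0 + of_int n * Lq) v * exp (of_real \<nu> * (\<sigma>0 + of_int n * Lq))
      = (exp (- al1 * v) * exp (of_real \<nu> * \<sigma>0)) * (wq q a0 b0 c0 d0 n * exp (of_real \<nu> * Lq) powi n)" for n
  proof -
    have "Kg q (Q (- lp1 + 1/2) * exp (\<sigma>0 + of_int n * Lq) / t1) (Q (- hp2 + lp2 - of_nat N) * exp (\<sigma>0 + of_int n * Lq) / exp v)
        (Q (- hp1 + 1/2) * exp (\<sigma>0 + of_int n * Lq) / t1) (exp (\<sigma>0 + of_int n * Lq) / exp v) = wq q a0 b0 c0 d0 n"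
      unfolding Kg_def wq_def exp_lattice a0_def b0_def c0_def d0_def arg_help1 arg_help2 ..
    then show ?thesis unfolding K1_def exp_nu_lattice by (simp only: mult_ac)
  qed
  show "(\<lambda>n::int. K1 (\<sigma>0 + of_int n * Lq) v * exp (of_real \<nu> * (\<sigma>0 + of_int n * Lq))) summable_on UNIV"
    unfolding e by (rule summable_on_cmult_right[OF s])
qed

lemma goodK2:
  assumes nu: "0 < \<nu>" "\<nu> < del"
  shows "goodK (\<lambda>\<sigma>. K2 \<sigma> v * exp (of_real \<nu> * \<sigma>))"
  unfolding goodK_def
proof
  fix \<sigma>0
  define a0 where "a0 = Q (lp1 + 1/2) * t1 * exp \<sigma>0"
  define b0 where "b0 = Q (hp2 - lp2 + of_nat N + 1) * exp v * exp \<sigma>0"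
  define c0 where "c0 = Q (hp1 + 1/2) * t1 * exp \<sigma>0"
  define d0 where "d0 = exp Lq * exp v * exp \<sigma>0"
  have QQ: "Q (hp1 + 1/2) * exp Lq = Q (of_real del) * (Q (lp1 + 1/2) * Q (hp2 - lp2 + of_nat N + 1))"
  proof -
    have "(hp1 + 1/2) + 1 = of_real del + ((lp1 + 1/2) + (hp2 - lp2 + of_nat N + 1))"
      unfolding del_def hp1_eq by (simp add: field_simps)
    then have "Q (hp1 + 1/2) * Q 1 = Q (of_real del) * (Q (lp1 + 1/2) * Q (hp2 - lp2 + of_nat N + 1))"
      by (metis qpw_add)
    then show ?thesis by (simp add: qpw_1)
  qed
  have cd: "c0 * d0 = Q (of_real del) * (a0 * b0)"
    unfolding a0_def b0_def c0_def d0_def using cd_help2[OF QQ] .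
  have s: "(\<lambda>n::int. wq q a0 b0 c0 d0 n * exp (of_real \<nu> * Lq) powi n) summable_on UNIV"
    by (rule wq_good[OF _ _ nu cd]) (use ht in \<open>simp_all add: a0_def b0_def\<close>)
  have e: "K2 (\<sigma>0 + of_int n * Lq) v * exp (of_real \<nu> * (\<sigma>0 + of_int n * Lq))
      = (exp ((- al1 - hp2 + lp2 - of_nat N) * v) * exp (of_real \<nu> * \<sigma>0)) * (wq q a0 b0 c0 d0 n * exp (of_real \<nu> * Lq) powi n)" for n
  proof -
    have "Kg q (Q (hp1 + 1/2) * t1 * exp (\<sigma>0 + of_int n * Lq)) (exp Lq * exp v * exp (\<sigma>0 + of_int n * Lq))
        (Q (lp1 + 1/2) * t1 * exp (\<sigma>0 + of_int n * Lq)) (Q (hp2 - lp2 + of_nat N + 1) * exp v * exp (\<sigma>0 + of_int n * Lq)) = wq q a0 b0 c0 d0 n"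
      unfolding Kg_def wq_def exp_lattice a0_def b0_def c0_def d0_def arg_help3 ..
    then show ?thesis unfolding K2_def exp_nu_lattice by (simp only: mult_ac)
  qed
  show "(\<lambda>n::int. K2 (\<sigma>0 + of_int n * Lq) v * exp (of_real \<nu> * (\<sigma>0 + of_int n * Lq))) summable_on UNIV"
    unfolding e by (rule summable_on_cmult_right[OF s])
qed

lemma goodK_poly:
  assumes hK: "\<And>\<nu>. 0 < \<nu> \<Longrightarrow> \<nu> < del \<Longrightarrow> goodK (\<lambda>\<sigma>. K \<sigma> * exp (of_real \<nu> * \<sigma>))"
    and hnu: "\<And>k. k \<le> N \<Longrightarrow> 0 < nu k - 1 \<and> nu k + 1 < del"
  shows "goodK (\<lambda>\<sigma>. K \<sigma> * (\<alpha> * inverse (exp \<sigma>) + \<beta> + \<gamma> * exp \<sigma>) * (\<Sum>k\<le>N. c k * exp (of_real (nu k) * \<sigma>)))"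
proof -
  have eq: "(\<lambda>\<sigma>. K \<sigma> * (\<alpha> * inverse (exp \<sigma>) + \<beta> + \<gamma> * exp \<sigma>) * (\<Sum>k\<le>N. c k * exp (of_real (nu k) * \<sigma>)))
    = (\<lambda>\<sigma>. \<Sum>k\<le>N. c k * (\<alpha> * (K \<sigma> * exp (of_real (nu k - 1) * \<sigma>)) + \<beta> * (K \<sigma> * exp (of_real (nu k) * \<sigma>))
           + \<gamma> * (K \<sigma> * exp (of_real (nu k + 1) * \<sigma>))))"
  proof
    fix \<sigma> :: complex
    have e1: "exp (of_real (nu k - 1) * \<sigma>) = inverse (exp \<sigma>) * exp (of_real (nu k) * \<sigma>)" for k
    proof -
      have h: "of_real (nu k - 1) * \<sigma> = (- \<sigma>) + of_real (nu k) * \<sigma>" by (simp add: algebra_simps)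
      show ?thesis by (simp only: h exp_add exp_minus)
    qed
    have e2: "exp (of_real (nu k + 1) * \<sigma>) = exp \<sigma> * exp (of_real (nu k) * \<sigma>)" for k
    proof -
      have h: "of_real (nu k + 1) * \<sigma> = \<sigma> + of_real (nu k) * \<sigma>" by (simp add: algebra_simps)
      show ?thesis by (simp only: h exp_add)
    qed
    show "K \<sigma> * (\<alpha> * inverse (exp \<sigma>) + \<beta> + \<gamma> * exp \<sigma>) * (\<Sum>k\<le>N. c k * exp (of_real (nu k) * \<sigma>))
      = (\<Sum>k\<le>N. c k * (\<alpha> * (K \<sigma> * exp (of_real (nu k - 1) * \<sigma>)) + \<beta> * (K \<sigma> * exp (of_real (nu k) * \<sigma>))
           + \<gamma> * (K \<sigma> * exp (of_real (nu k + 1) * \<sigma>))))"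
      unfolding e1 e2 sum_distrib_left by (rule sum.cong) (simp_all add: algebra_simps)
  qed
  show ?thesis unfolding eq
  proof (rule goodK_sum)
    fix k assume "k \<in> {..N}"
    then have k: "0 < nu k - 1" "nu k + 1 < del" using hnu by auto
    show "goodK (\<lambda>\<sigma>. c k * (\<alpha> * (K \<sigma> * exp (of_real (nu k - 1) * \<sigma>)) + \<beta> * (K \<sigma> * exp (of_real (nu k) * \<sigma>))
           + \<gamma> * (K \<sigma> * exp (of_real (nu k + 1) * \<sigma>))))"
      using k by (intro goodK_cmult goodK_add hK) auto
  qed simp
qed

definition "nu1 k = 1 - bp + real k"
definition "nu2 k = ap2 - ap1 + 1 + real N - real k"
lemma nu1_eq: "(- of_real bp + 1 + of_nat k :: complex) = of_real (nu1 k)" unfolding nu1_def by simp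
lemma nu2_eq: "k \<le> N \<Longrightarrow> (- of_real ap1 + of_real ap2 + 1 + of_nat N - of_nat k :: complex) = of_real (nu2 k)" unfolding nu2_def by simp
lemma nu1_ok: "k \<le> N \<Longrightarrow> 0 < nu1 k - 1 \<and> nu1 k + 1 < del" unfolding nu1_def del_def using hbp hap by simp
lemma nu2_ok: "k \<le> N \<Longrightarrow> 0 < nu2 k - 1 \<and> nu2 k + 1 < del" unfolding nu2_def del_def using hbp hap by simp

lemma P1_form: "P1 \<sigma> = (\<Sum>k\<le>N. cc k * exp (of_real (nu1 k) * \<sigma>))" unfolding P1_def nu1_eq ..
lemma P1m_form: "P1 (\<sigma> - Lq) = (\<Sum>k\<le>N. (cc k * Q (- of_real (nu1 k))) * exp (of_real (nu1 k) * \<sigma>))"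
  unfolding P1_def nu1_eq exp_shift_m by (simp add: ac_simps)
lemma P1p_form: "P1 (\<sigma> + Lq) = (\<Sum>k\<le>N. (cc k * Q (of_real (nu1 k))) * exp (of_real (nu1 k) * \<sigma>))"
  unfolding P1_def nu1_eq exp_shift_p by (simp add: ac_simps)
lemma P2_form: "P2 \<sigma> = (\<Sum>k\<le>N. cc k * exp (of_real (nu2 k) * \<sigma>))" unfolding P2_def using nu2_eq by (intro sum.cong) auto
lemma P2m_form: "P2 (\<sigma> - Lq) = (\<Sum>k\<le>N. (cc k * Q (- of_real (nu2 k))) * exp (of_real (nu2 k) * \<sigma>))"
  unfolding P2_def exp_shift_m using nu2_eq by (intro sum.cong) (auto simp: ac_simps)
lemma P2p_form: "P2 (\<sigma> + Lq) = (\<Sum>k\<le>N. (cc k * Q (of_real (nu2 k))) * exp (of_real (nu2 k) * \<sigma>))"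
  unfolding P2_def exp_shift_p using nu2_eq by (intro sum.cong) (auto simp: ac_simps)

lemma lin_form: "\<exists>\<alpha> \<beta> \<gamma>. \<forall>s. F s = \<alpha> * inverse s + \<beta> + \<gamma> * s" if "F = (\<lambda>s. A * (B * inverse s - C + D * s))" for F :: "complex \<Rightarrow> complex" and A B C D :: complex
  using that by (intro exI[of _ "A * B"] exI[of _ "- A * C"] exI[of _ "A * D"]) (simp add: algebra_simps)

lemma U1_lin: "\<exists>\<alpha> \<beta> \<gamma>. \<forall>s. U1 s = \<alpha> * inverse s + \<beta> + \<gamma> * s"
proof -
  have "\<forall>s. U1 s = (Q (1/2) * Q (1/2) * Q (- of_real bp) * kx) * inverse s
     + (- (Q (1/2) * Q (1/2) * Q (- of_real bp) * (Q (1/2) * Q (of_nat N) * Q (of_real ap2) * Yh)))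
     + (Q (1/2) * Q (1/2) * Q (- of_real bp) * (Q (of_nat N) * Q (of_real ap2))) * s"
    unfolding U1_def by (simp add: algebra_simps)
  then show ?thesis by blast
qed
lemma V1_lin: "\<exists>\<alpha> \<beta> \<gamma>. \<forall>s. V1 s = \<alpha> * inverse s + \<beta> + \<gamma> * s"
proof -
  have "\<forall>s. V1 s = (Q (- (1/2)) * Q (- (1/2)) * Q (of_real bp) * (kx * Q (- of_real bp))) * inverse s
     + (- (Q (- (1/2)) * Q (- (1/2)) * Q (of_real bp) * (Q (of_real ap1) * Q (- of_nat N) * Q (- (1/2)) * Yl)))
     + (Q (- (1/2)) * Q (- (1/2)) * Q (of_real bp) * (Q (of_real ap1) * Q (- of_nat N))) * s"
    unfolding V1_def by (simp add: algebra_simps)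
  then show ?thesis by blast
qed
lemma U2_lin: "\<exists>\<alpha> \<beta> \<gamma>. \<forall>s. U2 s = \<alpha> * inverse s + \<beta> + \<gamma> * s"
proof -
  have "\<forall>s. U2 s = (Q (- of_real ap1) * Q (of_real ap2) * Q (1/2) * Q (1/2) * Q (of_nat N) * (Q (of_real ap1) * Q (- of_nat N))) * inverse s
     + (- (Q (- of_real ap1) * Q (of_real ap2) * Q (1/2) * Q (1/2) * Q (of_nat N) * (Q (of_real ap1) * Q (- of_nat N) * Q (- (1/2)) * Yl)))
     + (Q (- of_real ap1) * Q (of_real ap2) * Q (1/2) * Q (1/2) * Q (of_nat N) * (kx * Q (- of_real bp))) * s"
    unfolding U2_def by (simp add: algebra_simps)
  then show ?thesis by blast
qed
lemma V2_lin: "\<exists>\<alpha> \<beta> \<gamma>. \<forall>s. V2 s = \<alpha> * inverse s + \<beta> + \<gamma> * s"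
proof -
  have "\<forall>s. V2 s = (Q (of_real ap1) * Q (- of_real ap2) * Q (- (1/2)) * Q (- (1/2)) * Q (- of_nat N) * (Q (of_nat N) * Q (of_real ap2))) * inverse s
     + (- (Q (of_real ap1) * Q (- of_real ap2) * Q (- (1/2)) * Q (- (1/2)) * Q (- of_nat N) * (Q (1/2) * Q (of_nat N) * Q (of_real ap2) * Yh)))
     + (Q (of_real ap1) * Q (- of_real ap2) * Q (- (1/2)) * Q (- (1/2)) * Q (- of_nat N) * kx) * s"
    unfolding V2_def by (simp add: algebra_simps)
  then show ?thesis by blast
qed

definition "G1 v \<sigma> = K1 \<sigma> v * P1 \<sigma>"
definition "D1 u \<sigma> = Q (al1 - of_real ap1) * (K1 \<sigma> u * U1 (exp \<sigma>) * P1 (\<sigma> - Lq) - K1 (\<sigma> - Lq) u * V1 (exp (\<sigma> - Lq)) * P1 \<sigma>)"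
definition "G2 v \<sigma> = K2 \<sigma> v * P2 \<sigma>"
definition "D2 u \<sigma> = Q (al1 - of_real ap1) * (K2 \<sigma> u * U2 (exp \<sigma>) * P2 (\<sigma> - Lq) - K2 (\<sigma> - Lq) u * V2 (exp (\<sigma> - Lq)) * P2 \<sigma>)"

lemma tel_alg:
  fixes c1 c2 c3 km kp k0 kup kdn Pm P0 Pp Uup U0 V0 Vdn W0 e0 lam :: complex
  assumes KER: "c1 * km + c2 * kp - c3 * k0 = lam * (kup * Uup + kdn * Vdn + k0 * W0)"
    and LP: "U0 * Pm + (W0 - e0) * P0 + V0 * Pp = 0"
  shows "c1 * (km * P0) + c2 * (kp * P0) - c3 * (k0 * P0) = (lam * e0) * (k0 * P0)
     + lam * (kup * Uup * P0 - k0 * V0 * Pp) - lam * (k0 * U0 * Pm - kdn * Vdn * P0)"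
  using KER LP by algebra

lemma TEL1:
  assumes Ca: "qinf q (Q (- hp1 + 1/2) * exp \<sigma> / t1 * inverse q) \<noteq> 0" and Cb: "qinf q (exp \<sigma> / exp u * inverse q) \<noteq> 0"
  shows "inverse (exp u) * (exp u - Q (h1 + 1/2) * t1) * (exp u - Q (h2 + 1/2) * t2) * G1 (u - Lq) \<sigma>
 + Q (al1 + al2) * inverse (exp u) * (exp u - Q (lp1 - 1/2) * t1) * (exp u - Q (lp2 - 1/2) * t2) * G1 (u + Lq) \<sigma>
 - ((Q al1 + Q al2) * exp u + (Q ((h1 + h2 + lp1 + lp2 + al1 + al2) / 2 + be / 2) + Q ((h1 + h2 + lp1 + lp2 + al1 + al2) / 2 + - be / 2)) * t1 * t2 * inverse (exp u)) * G1 u \<sigma>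
 = (Q (al1 - of_real ap1) * E0) * G1 u \<sigma> + D1 u (\<sigma> + Lq) - D1 u \<sigma>"
proof -
  have e: "\<sigma> + Lq - Lq = \<sigma>" by simp
  show ?thesis unfolding G1_def D1_def e
    using tel_alg[OF KER1[OF Ca Cb] LP1[of \<sigma>]] by (simp add: algebra_simps)
qed

lemma TEL2:
  assumes Ca: "qinf q (Q (lp1 + 1/2) * t1 * exp \<sigma> * inverse q) \<noteq> 0" and Cb: "qinf q (Q (hp2 - lp2 + of_nat N + 1) * exp u * exp \<sigma> * inverse q) \<noteq> 0"
  shows "inverse (exp u) * (exp u - Q (h1 + 1/2) * t1) * (exp u - Q (h2 + 1/2) * t2) * G2 (u - Lq) \<sigma>
 + Q (al1 + al2) * inverse (exp u) * (exp u - Q (lp1 - 1/2) * t1) * (exp u - Q (lp2 - 1/2) * t2) * G2 (u + Lq) \<sigma>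
 - ((Q al1 + Q al2) * exp u + (Q ((h1 + h2 + lp1 + lp2 + al1 + al2) / 2 + be / 2) + Q ((h1 + h2 + lp1 + lp2 + al1 + al2) / 2 + - be / 2)) * t1 * t2 * inverse (exp u)) * G2 u \<sigma>
 = (Q (al1 - of_real ap1) * E0) * G2 u \<sigma> + D2 u (\<sigma> + Lq) - D2 u \<sigma>"
proof -
  have e: "\<sigma> + Lq - Lq = \<sigma>" by simp
  show ?thesis unfolding G2_def D2_def e
    using tel_alg[OF KER2[OF Ca Cb] LP2[of \<sigma>]] by (simp add: algebra_simps)
qed

lemma good_G1: "goodK (G1 v)"
proof -
  have "goodK (\<lambda>\<sigma>. K1 \<sigma> v * (0 * inverse (exp \<sigma>) + 1 + 0 * exp \<sigma>) * (\<Sum>k\<le>N. cc k * exp (of_real (nu1 k) * \<sigma>)))"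
    by (rule goodK_poly[OF goodK1 nu1_ok])
  moreover have "(\<lambda>\<sigma>. K1 \<sigma> v * (0 * inverse (exp \<sigma>) + 1 + 0 * exp \<sigma>) * (\<Sum>k\<le>N. cc k * exp (of_real (nu1 k) * \<sigma>))) = G1 v"
    by (rule ext) (simp add: G1_def P1_form)
  ultimately show ?thesis by simp
qed

lemma good_D1: "goodK (D1 u)"
proof -
  obtain \<alpha> \<beta> \<gamma> where U: "\<And>s. U1 s = \<alpha> * inverse s + \<beta> + \<gamma> * s" using U1_lin by blast
  obtain \<alpha>' \<beta>' \<gamma>' where V: "\<And>s. V1 s = \<alpha>' * inverse s + \<beta>' + \<gamma>' * s" using V1_lin by blast
  have A: "goodK (\<lambda>\<sigma>. K1 \<sigma> u * U1 (exp \<sigma>) * P1 (\<sigma> - Lq))"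
  proof -
    have "goodK (\<lambda>\<sigma>. K1 \<sigma> u * (\<alpha> * inverse (exp \<sigma>) + \<beta> + \<gamma> * exp \<sigma>) * (\<Sum>k\<le>N. (cc k * Q (- of_real (nu1 k))) * exp (of_real (nu1 k) * \<sigma>)))"
      by (rule goodK_poly[OF goodK1 nu1_ok])
    then show ?thesis unfolding U P1m_form .
  qed
  have H: "goodK (\<lambda>\<tau>. K1 \<tau> u * V1 (exp \<tau>) * P1 (\<tau> + Lq))"
  proof -
    have "goodK (\<lambda>\<sigma>. K1 \<sigma> u * (\<alpha>' * inverse (exp \<sigma>) + \<beta>' + \<gamma>' * exp \<sigma>) * (\<Sum>k\<le>N. (cc k * Q (of_real (nu1 k))) * exp (of_real (nu1 k) * \<sigma>)))"
      by (rule goodK_poly[OF goodK1 nu1_ok])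
    then show ?thesis unfolding V P1p_form .
  qed
  have B: "goodK (\<lambda>\<sigma>. K1 (\<sigma> - Lq) u * V1 (exp (\<sigma> - Lq)) * P1 \<sigma>)"
  proof -
    have "goodK (\<lambda>\<sigma>. K1 (\<sigma> + - Lq) u * V1 (exp (\<sigma> + - Lq)) * P1 (\<sigma> + - Lq + Lq))"
      by (rule goodK_shift[OF H])
    then show ?thesis by simp
  qed
  have "goodK (\<lambda>\<sigma>. Q (al1 - of_real ap1) * (K1 \<sigma> u * U1 (exp \<sigma>) * P1 (\<sigma> - Lq) - K1 (\<sigma> - Lq) u * V1 (exp (\<sigma> - Lq)) * P1 \<sigma>))"
    by (rule goodK_cmult[OF goodK_diff[OF A B]])
  then show ?thesis unfolding D1_def[abs_def] .
qed

lemma good_G2: "goodK (G2 v)"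
proof -
  have "goodK (\<lambda>\<sigma>. K2 \<sigma> v * (0 * inverse (exp \<sigma>) + 1 + 0 * exp \<sigma>) * (\<Sum>k\<le>N. cc k * exp (of_real (nu2 k) * \<sigma>)))"
    by (rule goodK_poly[OF goodK2 nu2_ok])
  moreover have "(\<lambda>\<sigma>. K2 \<sigma> v * (0 * inverse (exp \<sigma>) + 1 + 0 * exp \<sigma>) * (\<Sum>k\<le>N. cc k * exp (of_real (nu2 k) * \<sigma>))) = G2 v"
    by (rule ext) (simp add: G2_def P2_form)
  ultimately show ?thesis by simp
qed

lemma good_D2: "goodK (D2 u)"
proof -
  obtain \<alpha> \<beta> \<gamma> where U: "\<And>s. U2 s = \<alpha> * inverse s + \<beta> + \<gamma> * s" using U2_lin by blast
  obtain \<alpha>' \<beta>' \<gamma>' where V: "\<And>s. V2 s = \<alpha>' * inverse s + \<beta>' + \<gamma>' * s" using V2_lin by blast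
  have A: "goodK (\<lambda>\<sigma>. K2 \<sigma> u * U2 (exp \<sigma>) * P2 (\<sigma> - Lq))"
  proof -
    have "goodK (\<lambda>\<sigma>. K2 \<sigma> u * (\<alpha> * inverse (exp \<sigma>) + \<beta> + \<gamma> * exp \<sigma>) * (\<Sum>k\<le>N. (cc k * Q (- of_real (nu2 k))) * exp (of_real (nu2 k) * \<sigma>)))"
      by (rule goodK_poly[OF goodK2 nu2_ok])
    then show ?thesis unfolding U P2m_form .
  qed
  have H: "goodK (\<lambda>\<tau>. K2 \<tau> u * V2 (exp \<tau>) * P2 (\<tau> + Lq))"
  proof -
    have "goodK (\<lambda>\<sigma>. K2 \<sigma> u * (\<alpha>' * inverse (exp \<sigma>) + \<beta>' + \<gamma>' * exp \<sigma>) * (\<Sum>k\<le>N. (cc k * Q (of_real (nu2 k))) * exp (of_real (nu2 k) * \<sigma>)))"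
      by (rule goodK_poly[OF goodK2 nu2_ok])
    then show ?thesis unfolding V P2p_form .
  qed
  have B: "goodK (\<lambda>\<sigma>. K2 (\<sigma> - Lq) u * V2 (exp (\<sigma> - Lq)) * P2 \<sigma>)"
  proof -
    have "goodK (\<lambda>\<sigma>. K2 (\<sigma> + - Lq) u * V2 (exp (\<sigma> + - Lq)) * P2 (\<sigma> + - Lq + Lq))"
      by (rule goodK_shift[OF H])
    then show ?thesis by simp
  qed
  have "goodK (\<lambda>\<sigma>. Q (al1 - of_real ap1) * (K2 \<sigma> u * U2 (exp \<sigma>) * P2 (\<sigma> - Lq) - K2 (\<sigma> - Lq) u * V2 (exp (\<sigma> - Lq)) * P2 \<sigma>))"
    by (rule goodK_cmult[OF goodK_diff[OF A B]])
  then show ?thesis unfolding D2_def[abs_def] .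
qed

definition "SS1 Lxi v n = (\<Sum>k\<le>N. qpw Lq ((- of_real bp + 1 + of_nat k) * of_int n) * exp ((- of_real bp + 1 + of_nat k) * Lxi v) * cseq Lq t1 t2 lp1 hp2 hp1 lp2 (of_real ap1) (of_real ap2) (of_real bp) E0 k)"
definition "SS2 Lxi v n = (\<Sum>k\<le>N. qpw Lq ((- of_real ap1 + of_real ap2 + 1 + of_nat N - of_nat k) * of_int n) * exp ((of_real ap1 - of_real ap2 - 1 - of_nat N + of_nat k) * Lxi v) * cseq Lq t1 t2 lp1 hp2 hp1 lp2 (of_real ap1) (of_real ap2) (of_real bp) E0 k)"

lemma SS1_P1: "SS1 Lxi v n = P1 (Lxi v + of_int n * Lq)"
  unfolding SS1_def P1_def
proof (rule sum.cong)
  fix k assume "k \<in> {..N}"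
  have "(- of_real bp + 1 + of_nat k) * (Lxi v + of_int n * Lq) = (- of_real bp + 1 + of_nat k) * Lxi v + (- of_real bp + 1 + of_nat k) * of_int n * Lq"
    by (simp add: algebra_simps)
  then show "qpw Lq ((- of_real bp + 1 + of_nat k) * of_int n) * exp ((- of_real bp + 1 + of_nat k) * Lxi v) * cseq Lq t1 t2 lp1 hp2 hp1 lp2 (of_real ap1) (of_real ap2) (of_real bp) E0 k
    = cc k * exp ((- of_real bp + 1 + of_nat k) * (Lxi v + of_int n * Lq))"
    unfolding qpw_def cc_def by (simp only: exp_add) (simp add: mult_ac)
qed simp

lemma SS2_P2: "SS2 Lxi v n = P2 (- Lxi v + of_int n * Lq)"
  unfolding SS2_def P2_def
proof (rule sum.cong)
  fix k assume "k \<in> {..N}"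
  have "(- of_real ap1 + of_real ap2 + 1 + of_nat N - of_nat k) * (- Lxi v + of_int n * Lq) = (of_real ap1 - of_real ap2 - 1 - of_nat N + of_nat k) * Lxi v + (- of_real ap1 + of_real ap2 + 1 + of_nat N - of_nat k) * of_int n * Lq"
    by (simp add: algebra_simps)
  then show "qpw Lq ((- of_real ap1 + of_real ap2 + 1 + of_nat N - of_nat k) * of_int n) * exp ((of_real ap1 - of_real ap2 - 1 - of_nat N + of_nat k) * Lxi v) * cseq Lq t1 t2 lp1 hp2 hp1 lp2 (of_real ap1) (of_real ap2) (of_real bp) E0 k
    = cc k * exp ((- of_real ap1 + of_real ap2 + 1 + of_nat N - of_nat k) * (- Lxi v + of_int n * Lq))"
    unfolding qpw_def cc_def by (simp only: exp_add) (simp add: mult_ac)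
qed simp

lemma CONV1:
  assumes adm: "admissible q (par1 Lq t1 hp1 hp2 lp1 lp2 N Lxi v)"
  shows "exp (- al1 * v) * (prefac q (par1 Lq t1 hp1 hp2 lp1 lp2 N Lxi v) * bilat_term q (par1 Lq t1 hp1 hp2 lp1 lp2 N Lxi v) (SS1 Lxi v) n)
    = G1 v (Lxi v + of_int n * Lq)"
proof -
  have c: "prefac q (par1 Lq t1 hp1 hp2 lp1 lp2 N Lxi v) * bilat_term q (par1 Lq t1 hp1 hp2 lp1 lp2 N Lxi v) (SS1 Lxi v) n
    = wq q (Q (- hp1 + 1/2) * exp (Lxi v) / t1) (exp (Lxi v) / exp v) (Q (- lp1 + 1/2) * exp (Lxi v) / t1) (Q (- hp2 + lp2 - of_nat N) * exp (Lxi v) / exp v) n * SS1 Lxi v n"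
    using adm_conv[OF hq(3) q_nz adm[unfolded par1_def]] unfolding par1_def .
  have k: "K1 (Lxi v + of_int n * Lq) v = exp (- al1 * v) * wq q (Q (- hp1 + 1/2) * exp (Lxi v) / t1) (exp (Lxi v) / exp v) (Q (- lp1 + 1/2) * exp (Lxi v) / t1) (Q (- hp2 + lp2 - of_nat N) * exp (Lxi v) / exp v) n"
    unfolding K1_def wq_def Kg_def exp_lattice arg_help1 arg_help2 ..
  show ?thesis unfolding c G1_def k SS1_P1 by (simp add: mult_ac)
qed

lemma CONV2:
  assumes adm: "admissible q (par2 Lq t1 hp1 hp2 lp1 lp2 N Lxi v)"
  shows "exp ((- al1 - hp2 + lp2 - of_nat N) * v) * (prefac q (par2 Lq t1 hp1 hp2 lp1 lp2 N Lxi v) * bilat_term q (par2 Lq t1 hp1 hp2 lp1 lp2 N Lxi v) (SS2 Lxi v) n)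
    = G2 v (- Lxi v + of_int n * Lq)"
proof -
  have c: "prefac q (par2 Lq t1 hp1 hp2 lp1 lp2 N Lxi v) * bilat_term q (par2 Lq t1 hp1 hp2 lp1 lp2 N Lxi v) (SS2 Lxi v) n
    = wq q (Q (lp1 + 1/2) * t1 / exp (Lxi v)) (Q (hp2 - lp2 + of_nat N + 1) * exp v / exp (Lxi v)) (Q (hp1 + 1/2) * t1 / exp (Lxi v)) (exp Lq * exp v / exp (Lxi v)) n * SS2 Lxi v n"
    using adm_conv[OF hq(3) q_nz adm[unfolded par2_def]] unfolding par2_def .
  have k: "K2 (- Lxi v + of_int n * Lq) v = exp ((- al1 - hp2 + lp2 - of_nat N) * v) * wq q (Q (lp1 + 1/2) * t1 / exp (Lxi v)) (Q (hp2 - lp2 + of_nat N + 1) * exp v / exp (Lxi v)) (Q (hp1 + 1/2) * t1 / exp (Lxi v)) (exp Lq * exp v / exp (Lxi v)) n"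
    unfolding K2_def wq_def Kg_def exp_lattice arg_help4 ..
  show ?thesis unfolding c G2_def k SS2_P2 by (simp add: mult_ac)
qed

lemma align: "infsum (\<lambda>n::int. F (\<sigma>0 + of_int m * Lq + of_int n * Lq)) UNIV = infsum (\<lambda>n::int. F (\<sigma>0 + of_int n * Lq)) UNIV"
proof -
  have bij: "bij_betw (\<lambda>n::int. n + m) UNIV UNIV"
    by (rule bij_betwI[of _ _ _ "\<lambda>n. n - m"]) auto
  have "infsum (\<lambda>n::int. F (\<sigma>0 + of_int (n + m) * Lq)) UNIV = infsum (\<lambda>n::int. F (\<sigma>0 + of_int n * Lq)) UNIV"
    using infsum_reindex_bij_betw[OF bij, of "\<lambda>n. F (\<sigma>0 + of_int n * Lq)"] by simp
  moreover have "(\<lambda>n::int. F (\<sigma>0 + of_int (n + m) * Lq)) = (\<lambda>n::int. F (\<sigma>0 + of_int m * Lq + of_int n * Lq))"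
    by (rule ext) (simp add: algebra_simps)
  ultimately show ?thesis by simp
qed

lemma powi_m1: "q powi (n - 1) = q powi n * inverse q"
  using q_nz by (simp add: power_int_diff divide_inverse)

lemma lat_succ: "\<sigma>0 + of_int n * Lq + Lq = \<sigma>0 + of_int (n + 1) * Lq"
  by (simp add: algebra_simps)

lemma MAIN1:
  assumes hxi: "(\<exists>c. \<forall>u. Lxi u = c) \<or> (\<exists>c. \<forall>u. Lxi u = c + u)"
  shows "(\<forall>u. admissible q (par1 Lq t1 hp1 hp2 lp1 lp2 N Lxi u) \<longrightarrow> bilat_term q (par1 Lq t1 hp1 hp2 lp1 lp2 N Lxi u) (SS1 Lxi u) summable_on UNIV)
    \<and> (\<forall>u. admissible q (par1 Lq t1 hp1 hp2 lp1 lp2 N Lxi u) \<and> admissible q (par1 Lq t1 hp1 hp2 lp1 lp2 N Lxi (u - Lq)) \<and> admissible q (par1 Lq t1 hp1 hp2 lp1 lp2 N Lxi (u + Lq)) \<longrightarrow>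
        A4 Lq t1 t2 h1 h2 lp1 lp2 al1 al2 be (\<lambda>v. (1 - q) * exp ((- al1) * v) * prefac q (par1 Lq t1 hp1 hp2 lp1 lp2 N Lxi v) * (\<Sum>\<^sub>\<infinity>n\<in>UNIV. bilat_term q (par1 Lq t1 hp1 hp2 lp1 lp2 N Lxi v) (SS1 Lxi v) n)) u
        = (Q (al1 - of_real ap1) * E0) * ((1 - q) * exp ((- al1) * u) * prefac q (par1 Lq t1 hp1 hp2 lp1 lp2 N Lxi u) * (\<Sum>\<^sub>\<infinity>n\<in>UNIV. bilat_term q (par1 Lq t1 hp1 hp2 lp1 lp2 N Lxi u) (SS1 Lxi u) n)))"
proof -
  define PP where "PP = par1 Lq t1 hp1 hp2 lp1 lp2 N Lxi"
  define gg where "gg v = (1 - q) * exp ((- al1) * v) * prefac q (PP v) * (\<Sum>\<^sub>\<infinity>n\<in>UNIV. bilat_term q (PP v) (SS1 Lxi v) n)" for v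
  have gsum: "gg v = (1 - q) * infsum (\<lambda>n. G1 v (Lxi v + of_int n * Lq)) UNIV" if adm: "admissible q (PP v)" for v
  proof -
    have "infsum (\<lambda>n. G1 v (Lxi v + of_int n * Lq)) UNIV = infsum (\<lambda>n. (exp ((- al1) * v) * prefac q (PP v)) * bilat_term q (PP v) (SS1 Lxi v) n) UNIV"
      using CONV1[OF adm[unfolded PP_def]] unfolding PP_def by (simp add: mult.assoc)
    also have "\<dots> = (exp ((- al1) * v) * prefac q (PP v)) * infsum (\<lambda>n. bilat_term q (PP v) (SS1 Lxi v) n) UNIV"
      by (rule infsum_cmult_right')
    finally show ?thesis unfolding gg_def by (simp add: mult.assoc)
  qed
  have part1: "bilat_term q (PP u) (SS1 Lxi u) summable_on UNIV" if adm: "admissible q (PP u)" for u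
  proof -
    have pnz: "exp ((- al1) * u) * prefac q (PP u) \<noteq> 0"
      using prefac_nz[OF hq(3) q_nz adm[unfolded PP_def par1_def]] unfolding PP_def par1_def by simp
    have "(\<lambda>n::int. G1 u (Lxi u + of_int n * Lq)) summable_on UNIV"
      using good_G1 unfolding goodK_def by blast
    then have "(\<lambda>n::int. inverse (exp ((- al1) * u) * prefac q (PP u)) * G1 u (Lxi u + of_int n * Lq)) summable_on UNIV"
      by (rule summable_on_cmult_right)
    moreover have "inverse (exp ((- al1) * u) * prefac q (PP u)) * G1 u (Lxi u + of_int n * Lq) = bilat_term q (PP u) (SS1 Lxi u) n" for n
      using inv_help[OF CONV1[OF adm[unfolded PP_def], of n] pnz[unfolded PP_def]] unfolding PP_def .
    ultimately show ?thesis by simp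
  qed
  have part2: "A4 Lq t1 t2 h1 h2 lp1 lp2 al1 al2 be gg u = (Q (al1 - of_real ap1) * E0) * gg u"
    if adm0: "admissible q (PP u)" and admm: "admissible q (PP (u - Lq))" and admp: "admissible q (PP (u + Lq))" for u
  proof -
    define \<sigma>0 where "\<sigma>0 = Lxi u"
    obtain mm mp :: int where mm: "Lxi (u - Lq) = \<sigma>0 + of_int mm * Lq" and mp: "Lxi (u + Lq) = \<sigma>0 + of_int mp * Lq"
    proof -
      from hxi show ?thesis
      proof
        assume "\<exists>c. \<forall>u. Lxi u = c"
        then obtain c where "\<And>u. Lxi u = c" by blast
        then show ?thesis using that[of 0 0] unfolding \<sigma>0_def by simp
      next
        assume "\<exists>c. \<forall>u. Lxi u = c + u"
        then obtain c where c: "\<And>u. Lxi u = c + u" by blast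
        show ?thesis using that[of "-1" "1"] unfolding \<sigma>0_def c by (simp add: algebra_simps)
      qed
    qed
    define fm where "fm n = G1 (u - Lq) (\<sigma>0 + of_int n * Lq)" for n :: int
    define fp where "fp n = G1 (u + Lq) (\<sigma>0 + of_int n * Lq)" for n :: int
    define f0 where "f0 n = G1 u (\<sigma>0 + of_int n * Lq)" for n :: int
    define DD where "DD n = D1 u (\<sigma>0 + of_int n * Lq)" for n :: int
    have gm: "gg (u - Lq) = (1 - q) * infsum fm UNIV"
      unfolding gsum[OF admm] mm fm_def align ..
    have gp: "gg (u + Lq) = (1 - q) * infsum fp UNIV"
      unfolding gsum[OF admp] mp fp_def align ..
    have g0: "gg u = (1 - q) * infsum f0 UNIV"
      unfolding gsum[OF adm0] f0_def \<sigma>0_def ..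
    have sm: "fm summable_on UNIV" and sp: "fp summable_on UNIV" and s0: "f0 summable_on UNIV" and sD: "DD summable_on UNIV"
      unfolding fm_def fp_def f0_def DD_def using good_G1 good_D1 unfolding goodK_def by blast+
    note ad = adm_parts[OF hq(3) q_nz adm0[unfolded PP_def par1_def]]
    have loc: "(inverse (exp u) * (exp u - Q (h1 + 1/2) * t1) * (exp u - Q (h2 + 1/2) * t2)) * fm n + (Q (al1 + al2) * inverse (exp u) * (exp u - Q (lp1 - 1/2) * t1) * (exp u - Q (lp2 - 1/2) * t2)) * fp n - ((Q al1 + Q al2) * exp u + (Q ((h1 + h2 + lp1 + lp2 + al1 + al2) / 2 + be / 2) + Q ((h1 + h2 + lp1 + lp2 + al1 + al2) / 2 + - be / 2)) * t1 * t2 * inverse (exp u)) * f0 n = (Q (al1 - of_real ap1) * E0) * f0 n + DD (n + 1) - DD n" for n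
    proof -
      have Ca: "qinf q (Q (- hp1 + 1/2) * exp (\<sigma>0 + of_int n * Lq) / t1 * inverse q) \<noteq> 0"
        using ad(5)[of "n - 1"] unfolding powi_m1 \<sigma>0_def exp_lattice ca_help1 .
      have Cb: "qinf q (exp (\<sigma>0 + of_int n * Lq) / exp u * inverse q) \<noteq> 0"
        using ad(6)[of "n - 1"] unfolding powi_m1 \<sigma>0_def exp_lattice cb_help1 .
      show ?thesis using TEL1[OF Ca Cb] unfolding fm_def fp_def f0_def DD_def lat_succ .
    qed
    have "A4 Lq t1 t2 h1 h2 lp1 lp2 al1 al2 be gg u = (inverse (exp u) * (exp u - Q (h1 + 1/2) * t1) * (exp u - Q (h2 + 1/2) * t2)) * gg (u - Lq) + (Q (al1 + al2) * inverse (exp u) * (exp u - Q (lp1 - 1/2) * t1) * (exp u - Q (lp2 - 1/2) * t2)) * gg (u + Lq) - ((Q al1 + Q al2) * exp u + (Q ((h1 + h2 + lp1 + lp2 + al1 + al2) / 2 + be / 2) + Q ((h1 + h2 + lp1 + lp2 + al1 + al2) / 2 + - be / 2)) * t1 * t2 * inverse (exp u)) * gg u"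
      by (rule A4nf)
    also have "\<dots> = (1 - q) * ((inverse (exp u) * (exp u - Q (h1 + 1/2) * t1) * (exp u - Q (h2 + 1/2) * t2)) * infsum fm UNIV + (Q (al1 + al2) * inverse (exp u) * (exp u - Q (lp1 - 1/2) * t1) * (exp u - Q (lp2 - 1/2) * t2)) * infsum fp UNIV - ((Q al1 + Q al2) * exp u + (Q ((h1 + h2 + lp1 + lp2 + al1 + al2) / 2 + be / 2) + Q ((h1 + h2 + lp1 + lp2 + al1 + al2) / 2 + - be / 2)) * t1 * t2 * inverse (exp u)) * infsum f0 UNIV)"
      unfolding gm gp g0 by (rule fac_help)
    also have "\<dots> = (1 - q) * ((Q (al1 - of_real ap1) * E0) * infsum f0 UNIV)"
      using tele_sum[OF sm sp s0 sD loc] by simp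
    also have "\<dots> = (Q (al1 - of_real ap1) * E0) * gg u" unfolding g0 by (simp only: mult_ac)
    finally show ?thesis .
  qed
  show ?thesis using part1 part2 unfolding PP_def[symmetric] gg_def[symmetric] by blast
qed

lemma MAIN2:
  assumes hxi: "(\<exists>c. \<forall>u. Lxi u = c) \<or> (\<exists>c. \<forall>u. Lxi u = c + u)"
  shows "(\<forall>u. admissible q (par2 Lq t1 hp1 hp2 lp1 lp2 N Lxi u) \<longrightarrow> bilat_term q (par2 Lq t1 hp1 hp2 lp1 lp2 N Lxi u) (SS2 Lxi u) summable_on UNIV)
    \<and> (\<forall>u. admissible q (par2 Lq t1 hp1 hp2 lp1 lp2 N Lxi u) \<and> admissible q (par2 Lq t1 hp1 hp2 lp1 lp2 N Lxi (u - Lq)) \<and> admissible q (par2 Lq t1 hp1 hp2 lp1 lp2 N Lxi (u + Lq)) \<longrightarrow>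
        A4 Lq t1 t2 h1 h2 lp1 lp2 al1 al2 be (\<lambda>v. (1 - q) * exp ((- al1 - hp2 + lp2 - of_nat N) * v) * prefac q (par2 Lq t1 hp1 hp2 lp1 lp2 N Lxi v) * (\<Sum>\<^sub>\<infinity>n\<in>UNIV. bilat_term q (par2 Lq t1 hp1 hp2 lp1 lp2 N Lxi v) (SS2 Lxi v) n)) u
        = (Q (al1 - of_real ap1) * E0) * ((1 - q) * exp ((- al1 - hp2 + lp2 - of_nat N) * u) * prefac q (par2 Lq t1 hp1 hp2 lp1 lp2 N Lxi u) * (\<Sum>\<^sub>\<infinity>n\<in>UNIV. bilat_term q (par2 Lq t1 hp1 hp2 lp1 lp2 N Lxi u) (SS2 Lxi u) n)))"
proof -
  define PP where "PP = par2 Lq t1 hp1 hp2 lp1 lp2 N Lxi"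
  define gg where "gg v = (1 - q) * exp ((- al1 - hp2 + lp2 - of_nat N) * v) * prefac q (PP v) * (\<Sum>\<^sub>\<infinity>n\<in>UNIV. bilat_term q (PP v) (SS2 Lxi v) n)" for v
  have gsum: "gg v = (1 - q) * infsum (\<lambda>n. G2 v (- Lxi v + of_int n * Lq)) UNIV" if adm: "admissible q (PP v)" for v
  proof -
    have "infsum (\<lambda>n. G2 v (- Lxi v + of_int n * Lq)) UNIV = infsum (\<lambda>n. (exp ((- al1 - hp2 + lp2 - of_nat N) * v) * prefac q (PP v)) * bilat_term q (PP v) (SS2 Lxi v) n) UNIV"
      using CONV2[OF adm[unfolded PP_def]] unfolding PP_def by (simp add: mult.assoc)
    also have "\<dots> = (exp ((- al1 - hp2 + lp2 - of_nat N) * v) * prefac q (PP v)) * infsum (\<lambda>n. bilat_term q (PP v) (SS2 Lxi v) n) UNIV"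
      by (rule infsum_cmult_right')
    finally show ?thesis unfolding gg_def by (simp add: mult.assoc)
  qed
  have part1: "bilat_term q (PP u) (SS2 Lxi u) summable_on UNIV" if adm: "admissible q (PP u)" for u
  proof -
    have pnz: "exp ((- al1 - hp2 + lp2 - of_nat N) * u) * prefac q (PP u) \<noteq> 0"
      using prefac_nz[OF hq(3) q_nz adm[unfolded PP_def par2_def]] unfolding PP_def par2_def by simp
    have "(\<lambda>n::int. G2 u (- Lxi u + of_int n * Lq)) summable_on UNIV"
      using good_G2 unfolding goodK_def by blast
    then have "(\<lambda>n::int. inverse (exp ((- al1 - hp2 + lp2 - of_nat N) * u) * prefac q (PP u)) * G2 u (- Lxi u + of_int n * Lq)) summable_on UNIV"
      by (rule summable_on_cmult_right)
    moreover have "inverse (exp ((- al1 - hp2 + lp2 - of_nat N) * u) * prefac q (PP u)) * G2 u (- Lxi u + of_int n * Lq) = bilat_term q (PP u) (SS2 Lxi u) n" for n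
      using inv_help[OF CONV2[OF adm[unfolded PP_def], of n] pnz[unfolded PP_def]] unfolding PP_def .
    ultimately show ?thesis by simp
  qed
  have part2: "A4 Lq t1 t2 h1 h2 lp1 lp2 al1 al2 be gg u = (Q (al1 - of_real ap1) * E0) * gg u"
    if adm0: "admissible q (PP u)" and admm: "admissible q (PP (u - Lq))" and admp: "admissible q (PP (u + Lq))" for u
  proof -
    define \<sigma>0 where "\<sigma>0 = - Lxi u"
    obtain mm mp :: int where mm: "- Lxi (u - Lq) = \<sigma>0 + of_int mm * Lq" and mp: "- Lxi (u + Lq) = \<sigma>0 + of_int mp * Lq"
    proof -
      from hxi show ?thesis
      proof
        assume "\<exists>c. \<forall>u. Lxi u = c"
        then obtain c where "\<And>u. Lxi u = c" by blast
        then show ?thesis using that[of 0 0] unfolding \<sigma>0_def by simp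
      next
        assume "\<exists>c. \<forall>u. Lxi u = c + u"
        then obtain c where c: "\<And>u. Lxi u = c + u" by blast
        show ?thesis using that[of "1" "-1"] unfolding \<sigma>0_def c by (simp add: algebra_simps)
      qed
    qed
    define fm where "fm n = G2 (u - Lq) (\<sigma>0 + of_int n * Lq)" for n :: int
    define fp where "fp n = G2 (u + Lq) (\<sigma>0 + of_int n * Lq)" for n :: int
    define f0 where "f0 n = G2 u (\<sigma>0 + of_int n * Lq)" for n :: int
    define DD where "DD n = D2 u (\<sigma>0 + of_int n * Lq)" for n :: int
    have gm: "gg (u - Lq) = (1 - q) * infsum fm UNIV"
      unfolding gsum[OF admm] mm fm_def align ..
    have gp: "gg (u + Lq) = (1 - q) * infsum fp UNIV"
      unfolding gsum[OF admp] mp fp_def align ..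
    have g0: "gg u = (1 - q) * infsum f0 UNIV"
      unfolding gsum[OF adm0] f0_def \<sigma>0_def ..
    have sm: "fm summable_on UNIV" and sp: "fp summable_on UNIV" and s0: "f0 summable_on UNIV" and sD: "DD summable_on UNIV"
      unfolding fm_def fp_def f0_def DD_def using good_G2 good_D2 unfolding goodK_def by blast+
    note ad = adm_parts[OF hq(3) q_nz adm0[unfolded PP_def par2_def]]
    have loc: "(inverse (exp u) * (exp u - Q (h1 + 1/2) * t1) * (exp u - Q (h2 + 1/2) * t2)) * fm n + (Q (al1 + al2) * inverse (exp u) * (exp u - Q (lp1 - 1/2) * t1) * (exp u - Q (lp2 - 1/2) * t2)) * fp n - ((Q al1 + Q al2) * exp u + (Q ((h1 + h2 + lp1 + lp2 + al1 + al2) / 2 + be / 2) + Q ((h1 + h2 + lp1 + lp2 + al1 + al2) / 2 + - be / 2)) * t1 * t2 * inverse (exp u)) * f0 n = (Q (al1 - of_real ap1) * E0) * f0 n + DD (n + 1) - DD n" for n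
    proof -
      have Ca: "qinf q (Q (lp1 + 1/2) * t1 * exp (\<sigma>0 + of_int n * Lq) * inverse q) \<noteq> 0"
        using ad(5)[of "n - 1"] unfolding powi_m1 \<sigma>0_def exp_lattice ca_help2 .
      have Cb: "qinf q (Q (hp2 - lp2 + of_nat N + 1) * exp u * exp (\<sigma>0 + of_int n * Lq) * inverse q) \<noteq> 0"
        using ad(6)[of "n - 1"] unfolding powi_m1 \<sigma>0_def exp_lattice ca_help2 .
      show ?thesis using TEL2[OF Ca Cb] unfolding fm_def fp_def f0_def DD_def lat_succ .
    qed
    have "A4 Lq t1 t2 h1 h2 lp1 lp2 al1 al2 be gg u = (inverse (exp u) * (exp u - Q (h1 + 1/2) * t1) * (exp u - Q (h2 + 1/2) * t2)) * gg (u - Lq) + (Q (al1 + al2) * inverse (exp u) * (exp u - Q (lp1 - 1/2) * t1) * (exp u - Q (lp2 - 1/2) * t2)) * gg (u + Lq) - ((Q al1 + Q al2) * exp u + (Q ((h1 + h2 + lp1 + lp2 + al1 + al2) / 2 + be / 2) + Q ((h1 + h2 + lp1 + lp2 + al1 + al2) / 2 + - be / 2)) * t1 * t2 * inverse (exp u)) * gg u"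
      by (rule A4nf)
    also have "\<dots> = (1 - q) * ((inverse (exp u) * (exp u - Q (h1 + 1/2) * t1) * (exp u - Q (h2 + 1/2) * t2)) * infsum fm UNIV + (Q (al1 + al2) * inverse (exp u) * (exp u - Q (lp1 - 1/2) * t1) * (exp u - Q (lp2 - 1/2) * t2)) * infsum fp UNIV - ((Q al1 + Q al2) * exp u + (Q ((h1 + h2 + lp1 + lp2 + al1 + al2) / 2 + be / 2) + Q ((h1 + h2 + lp1 + lp2 + al1 + al2) / 2 + - be / 2)) * t1 * t2 * inverse (exp u)) * infsum f0 UNIV)"
      unfolding gm gp g0 by (rule fac_help)
    also have "\<dots> = (1 - q) * ((Q (al1 - of_real ap1) * E0) * infsum f0 UNIV)"
      using tele_sum[OF sm sp s0 sD loc] by simp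
    also have "\<dots> = (Q (al1 - of_real ap1) * E0) * gg u" unfolding g0 by (simp only: mult_ac)
    finally show ?thesis .
  qed
  show ?thesis using part1 part2 unfolding PP_def[symmetric] gg_def[symmetric] by blast
qed

end


theorem theorem3p2:
  fixes q Lq t1 t2 :: complex
    and hp1 hp2 lp1 lp2 :: complex
    and ap1 ap2 bp :: real
    and N :: nat
    and E0 al1 :: complex
    and Lxi :: "complex \<Rightarrow> complex"
  assumes hq: "exp Lq = q" "0 < norm q" "norm q < 1"
    and ht: "t1 \<noteq> 0" "t2 \<noteq> 0"
    and hN: "(hp1 - hp2 - lp1 + lp2 + of_real ap1 - of_real ap2 + of_real bp - 2) / 2 = of_nat N"
    and hbp: "bp < 0"
    and hap: "ap1 < ap2"
    and hroot: "cpoly Lq t1 t2 lp1 hp2 hp1 lp2 (of_real ap1) (of_real ap2) (of_real bp) N E0 = 0"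
    and hxi: "(\<exists>c. \<forall>u. Lxi u = c) \<or> (\<exists>c. \<forall>u. Lxi u = c + u)"
  defines "al2 \<equiv> al1 - of_real ap1 + of_real ap2 + hp2 - lp2 + 1 + of_nat N"
    and "be \<equiv> hp1 - lp1 + of_real ap1 - of_real ap2 - 1 - of_nat N"
    and "l1 \<equiv> lp1"
    and "l2 \<equiv> lp2"
    and "h1 \<equiv> hp1 - hp2 + lp2 - 1 - of_nat N"
    and "h2 \<equiv> lp2 - 1 - of_nat N"
    and "E \<equiv> qpw Lq (al1 - of_real ap1) * E0"
    and "P1 \<equiv> par1 Lq t1 hp1 hp2 lp1 lp2 N Lxi"
    and "P2 \<equiv> par2 Lq t1 hp1 hp2 lp1 lp2 N Lxi"
    and "S1 \<equiv> \<lambda>u (n::int). \<Sum>k\<le>N. qpw Lq ((- of_real bp + 1 + of_nat k) * of_int n)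
                          * exp ((- of_real bp + 1 + of_nat k) * Lxi u) * cseq Lq t1 t2 lp1 hp2 hp1 lp2 (of_real ap1) (of_real ap2) (of_real bp) E0 k"
    and "S2 \<equiv> \<lambda>u (n::int). \<Sum>k\<le>N. qpw Lq ((- of_real ap1 + of_real ap2 + 1 + of_nat N - of_nat k) * of_int n)
                          * exp ((of_real ap1 - of_real ap2 - 1 - of_nat N + of_nat k) * Lxi u) * cseq Lq t1 t2 lp1 hp2 hp1 lp2 (of_real ap1) (of_real ap2) (of_real bp) E0 k"
  shows "(\<forall>u. admissible q (P1 u) \<longrightarrow> bilat_term q (P1 u) (S1 u) summable_on UNIV)
       \<and> (\<forall>u. admissible q (P1 u) \<and> admissible q (P1 (u - Lq)) \<and> admissible q (P1 (u + Lq)) \<longrightarrow>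
              A4 Lq t1 t2 h1 h2 l1 l2 al1 al2 be
                 (\<lambda>v. (1 - q) * exp (- al1 * v) * prefac q (P1 v)
                        * (\<Sum>\<^sub>\<infinity>n\<in>UNIV. bilat_term q (P1 v) (S1 v) n)) u
              = E * ((1 - q) * exp (- al1 * u) * prefac q (P1 u)
                        * (\<Sum>\<^sub>\<infinity>n\<in>UNIV. bilat_term q (P1 u) (S1 u) n)))
       \<and> (\<forall>u. admissible q (P2 u) \<longrightarrow> bilat_term q (P2 u) (S2 u) summable_on UNIV)
       \<and> (\<forall>u. admissible q (P2 u) \<and> admissible q (P2 (u - Lq)) \<and> admissible q (P2 (u + Lq)) \<longrightarrow>
              A4 Lq t1 t2 h1 h2 l1 l2 al1 al2 be
                 (\<lambda>v. (1 - q) * exp ((- al1 - hp2 + lp2 - of_nat N) * v) * prefac q (P2 v)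
                        * (\<Sum>\<^sub>\<infinity>n\<in>UNIV. bilat_term q (P2 v) (S2 v) n)) u
              = E * ((1 - q) * exp ((- al1 - hp2 + lp2 - of_nat N) * u) * prefac q (P2 u)
                        * (\<Sum>\<^sub>\<infinity>n\<in>UNIV. bilat_term q (P2 u) (S2 u) n)))"
  proof -
  interpret L: sett q Lq t1 t2 hp1 hp2 lp1 lp2 ap1 ap2 bp N E0 al1
    using hq ht hN hbp hap hroot by unfold_locales auto
  note M1 = L.MAIN1[OF hxi] and M2 = L.MAIN2[OF hxi]
  show ?thesis
    using M1 M2
    unfolding L.h1_def L.h2_def L.al2_def L.be_def L.SS1_def[abs_def] L.SS2_def[abs_def]
    unfolding al2_def be_def l1_def l2_def h1_def h2_def E_def P1_def P2_def S1_def S2_def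
    by blast
qed

end
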